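(* Let $N\geq 3$, let $\Omega\subset\mathbb{R}^N$ be a bounded domain with smooth boundary, let $2\leq q<p\leq 2^*:=\frac{2N}{N-2}$, and let $a,b,\lambda,\mu>0$. Let $\alpha>0$ and let $u_\alpha$ be a solution of $$-\Delta u=\alpha u^{q-1}+u^{p-1}\ \text{in }\Omega,\qquad u>0\ \text{in }\Omega,\qquad u=0\ \text{on }\partial\Omega. \qquad (\mathcal{P}_\alpha)$$ Define $$f_{a,b,\lambda,\mu}(\alpha):=a\bigg(\frac{\alpha\mu^{\frac{q-2}{p-2}}}{\lambda}\bigg)^{\frac{p-2}{p-q}}+b\bigg(\frac{\alpha\mu^{\frac{q-2}{p-2}}}{\lambda}\bigg)^{\frac{p-4}{p-q}}\mu^{\frac{2}{2-p}}\int_{\Omega}|\nabla u_{\alpha}|^2dx.$$ Then $\big(\frac{\lambda}{\alpha\mu}\big)^{\frac{1}{p-q}}u_\alpha$ is a solution of $$-\bigg(a+b\int_{\Omega}|\nabla u|^2dx\bigg)\Delta u=\lambda u^{q-1}+\mu u^{p-1}\ \text{in }\Omega,\qquad u>0\ \text{in }\Omega,\qquad u=0\ \text{on }\partial\Omega$$ if and only if $f_{a,b,\lambda,\mu}(\alpha)=1$.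
   Context: Solutions are understood in $H_0^1(\Omega)$ (weak sense). *)

theory Defs
  imports "HOL-Analysis.Analysis"
begin

definition pdiff :: "(real^'n \<Rightarrow> real) \<Rightarrow> 'n \<Rightarrow> real^'n \<Rightarrow> real" where
  "pdiff f i x = frechet_derivative f (at x) (axis i 1)"

definition grad :: "(real^'n \<Rightarrow> real) \<Rightarrow> real^'n \<Rightarrow> real^'n" where
  "grad f x = (\<chi> i. pdiff f i x)"

coinductive Cinf :: "(real^'n \<Rightarrow> real) \<Rightarrow> bool" where
  "\<lbrakk>\<forall>x. f differentiable (at x); \<forall>i. Cinf (pdiff f i)\<rbrakk> \<Longrightarrow> Cinf f"

definition test_fun :: "(real^'n) set \<Rightarrow> (real^'n \<Rightarrow> real) \<Rightarrow> bool" where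
  "test_fun \<Omega> \<phi> \<longleftrightarrow> Cinf \<phi> \<and> compact (closure {x. \<phi> x \<noteq> 0}) \<and> closure {x. \<phi> x \<noteq> 0} \<subseteq> \<Omega>"

definition smooth_bounded_domain :: "(real^'n) set \<Rightarrow> bool" where
  "smooth_bounded_domain \<Omega> \<longleftrightarrow> open \<Omega> \<and> connected \<Omega> \<and> \<Omega> \<noteq> {} \<and> bounded \<Omega> \<and>
     (\<forall>x\<in>frontier \<Omega>. \<exists>U \<phi>. open U \<and> x \<in> U \<and> Cinf \<phi> \<and> (\<forall>y\<in>U. grad \<phi> y \<noteq> 0) \<and>
        \<Omega> \<inter> U = {y\<in>U. \<phi> y < 0})"

definition H01 :: "(real^'n) set \<Rightarrow> (real^'n \<Rightarrow> real) \<Rightarrow> (real^'n \<Rightarrow> real^'n) \<Rightarrow> bool" where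
  "H01 \<Omega> u G \<longleftrightarrow>
     set_borel_measurable lborel \<Omega> u \<and> set_borel_measurable lborel \<Omega> G \<and>
     set_integrable lborel \<Omega> (\<lambda>x. (u x)\<^sup>2) \<and> set_integrable lborel \<Omega> (\<lambda>x. (norm (G x))\<^sup>2) \<and>
     (\<exists>\<psi>. (\<forall>k. test_fun \<Omega> (\<psi> k)) \<and>
        (\<lambda>k. LINT x:\<Omega>|lborel. (\<psi> k x - u x)\<^sup>2) \<longlonglongrightarrow> 0 \<and>
        (\<lambda>k. LINT x:\<Omega>|lborel. (norm (grad (\<psi> k) x - G x))\<^sup>2) \<longlonglongrightarrow> 0)"

definition dirichlet :: "(real^'n) set \<Rightarrow> (real^'n \<Rightarrow> real^'n) \<Rightarrow> real" where
  "dirichlet \<Omega> G = (LINT x:\<Omega>|lborel. (norm (G x))\<^sup>2)"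

definition weak_sol_with :: "(real \<Rightarrow> real) \<Rightarrow> real \<Rightarrow> real \<Rightarrow> real \<Rightarrow> real \<Rightarrow> (real^'n) set \<Rightarrow>
    (real^'n \<Rightarrow> real) \<Rightarrow> (real^'n \<Rightarrow> real^'n) \<Rightarrow> bool" where
  "weak_sol_with M lam mu q p \<Omega> u G \<longleftrightarrow>
     H01 \<Omega> u G \<and> (AE x in lborel. x \<in> \<Omega> \<longrightarrow> u x > 0) \<and>
     (\<forall>\<phi>. test_fun \<Omega> \<phi> \<longrightarrow>
        set_integrable lborel \<Omega> (\<lambda>x. G x \<bullet> grad \<phi> x) \<and>
        set_integrable lborel \<Omega> (\<lambda>x. (lam * u x powr (q - 1) + mu * u x powr (p - 1)) * \<phi> x) \<and>
        M (dirichlet \<Omega> G) * (LINT x:\<Omega>|lborel. G x \<bullet> grad \<phi> x) =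
          (LINT x:\<Omega>|lborel. (lam * u x powr (q - 1) + mu * u x powr (p - 1)) * \<phi> x))"

definition sol_P :: "real \<Rightarrow> real \<Rightarrow> real \<Rightarrow> (real^'n) set \<Rightarrow> (real^'n \<Rightarrow> real) \<Rightarrow> (real^'n \<Rightarrow> real^'n) \<Rightarrow> bool" where
  "sol_P \<alpha> q p \<Omega> u G \<longleftrightarrow> weak_sol_with (\<lambda>_. 1) \<alpha> 1 q p \<Omega> u G"

definition sol_Kirchhoff :: "real \<Rightarrow> real \<Rightarrow> real \<Rightarrow> real \<Rightarrow> real \<Rightarrow> real \<Rightarrow> (real^'n) set \<Rightarrow> (real^'n \<Rightarrow> real) \<Rightarrow> bool" where
  "sol_Kirchhoff a b lam mu q p \<Omega> u \<longleftrightarrow> (\<exists>G. weak_sol_with (\<lambda>D. a + b * D) lam mu q p \<Omega> u G)"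

definition f_abl :: "real \<Rightarrow> real \<Rightarrow> real \<Rightarrow> real \<Rightarrow> real \<Rightarrow> real \<Rightarrow> (real^'n) set \<Rightarrow> (real^'n \<Rightarrow> real^'n) \<Rightarrow> real \<Rightarrow> real" where
  "f_abl a b lam mu q p \<Omega> G \<alpha> =
     a * (\<alpha> * mu powr ((q - 2) / (p - 2)) / lam) powr ((p - 2) / (p - q)) +
     b * (\<alpha> * mu powr ((q - 2) / (p - 2)) / lam) powr ((p - 4) / (p - q)) * mu powr (2 / (2 - p)) *
       dirichlet \<Omega> G"

end

theory Submission
  imports Defs
begin
lemma quad_discr:
  fixes A B C :: real
  assumes A: "A \<ge> 0" and h: "\<And>s. 0 \<le> A* s^2 + 2*C* s + B"
  shows "C^2 \<le> A*B"
proof (cases "A = 0")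
  case True
  have "C = 0"
  proof (rule ccontr)
    assume "C \<noteq> 0"
    have "0 \<le> A*(-(B+1)/(2*C))^2 + 2*C*(-(B+1)/(2*C)) + B" by (rule h)
    with True \<open>C\<noteq>0\<close> show False by simp
  qed
  then show ?thesis using True by simp
next
  case False
  hence Ap: "A > 0" using A by simp
  have "0 \<le> A*(-C/A)^2 + 2*C*(-C/A) + B" by (rule h)
  hence "0 \<le> B - C^2/A" using Ap by (simp add: power2_eq_square)
  hence "C^2/A \<le> B" by simp
  thus ?thesis using Ap by (simp add: divide_le_eq mult.commute)
qed
lemma ab_le_sq: fixes a b :: real assumes "0 \<le> a" "0 \<le> b" shows "a*b \<le> a^2 + b^2"
proof -
  have h1: "2*(a*b) \<le> a^2+b^2" using zero_le_square[of "a-b"] by (simp add: power2_eq_square algebra_simps)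
  have h2: "0 \<le> a*b" using assms by simp
  from h1 h2 show ?thesis by linarith
qed

lemma norm_sq_expand: "(norm (s *\<^sub>R F + G))^2 = s^2 * (norm (F::'b::euclidean_space))^2 + 2* s*(F \<bullet> G) + (norm G)^2"
  unfolding power2_norm_eq_inner by (simp add: inner_add_left inner_add_right inner_commute algebra_simps power2_eq_square)

lemma L2_inner:
  fixes F G :: "'a \<Rightarrow> 'b::euclidean_space"
  assumes [measurable]: "F \<in> borel_measurable M" "G \<in> borel_measurable M"
    and iF: "integrable M (\<lambda>x. (norm (F x))^2)" and iG: "integrable M (\<lambda>x. (norm (G x))^2)"
  shows "integrable M (\<lambda>x. F x \<bullet> G x)"
    and "\<bar>integral\<^sup>L M (\<lambda>x. F x \<bullet> G x)\<bar> \<le> sqrt (integral\<^sup>L M (\<lambda>x. (norm (F x))^2)) * sqrt (integral\<^sup>L M (\<lambda>x. (norm (G x))^2))"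
proof -
  have bnd: "norm (F x \<bullet> G x) \<le> ((norm (F x))^2 + (norm (G x))^2)" for x
  proof -
    have "norm (F x \<bullet> G x) \<le> norm (F x) * norm (G x)" using Cauchy_Schwarz_ineq2 by simp
    also have "\<dots> \<le> (norm (F x))^2 + (norm (G x))^2" by (rule ab_le_sq) simp_all
    finally show ?thesis .
  qed
  show int: "integrable M (\<lambda>x. F x \<bullet> G x)"
    by (rule Bochner_Integration.integrable_bound[OF Bochner_Integration.integrable_add[OF iF iG]]) (use bnd in auto)
  define A where "A = integral\<^sup>L M (\<lambda>x. (norm (F x))^2)"
  define B where "B = integral\<^sup>L M (\<lambda>x. (norm (G x))^2)"
  define C where "C = integral\<^sup>L M (\<lambda>x. F x \<bullet> G x)"
  have A0: "A \<ge> 0" unfolding A_def by simp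
  have "0 \<le> A* s^2 + 2*C* s + B" for s
  proof -
    have "0 \<le> integral\<^sup>L M (\<lambda>x. (norm (s *\<^sub>R F x + G x))^2)" by simp
    also have "\<dots> = integral\<^sup>L M (\<lambda>x. s^2 * (norm (F x))^2 + 2* s*(F x \<bullet> G x) + (norm (G x))^2)"
      by (simp only: norm_sq_expand)
    also have "\<dots> = A* s^2 + 2*C* s + B"
      using iF iG int unfolding A_def B_def C_def by (simp add: integral_add)
    finally show ?thesis .
  qed
  from quad_discr[OF A0 this] have "C^2 \<le> A*B" .
  hence "sqrt (C^2) \<le> sqrt (A*B)" by (rule real_sqrt_le_mono)
  thus "\<bar>integral\<^sup>L M (\<lambda>x. F x \<bullet> G x)\<bar> \<le> sqrt (integral\<^sup>L M (\<lambda>x. (norm (F x))^2)) * sqrt (integral\<^sup>L M (\<lambda>x. (norm (G x))^2))"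
    unfolding A_def B_def C_def by (simp add: real_sqrt_mult)
qed

lemma L2_conv:
  fixes F :: "nat \<Rightarrow> 'a \<Rightarrow> 'b::euclidean_space" and F0 G :: "'a \<Rightarrow> 'b"
  assumes [measurable]: "\<And>k. F k \<in> borel_measurable M" "F0 \<in> borel_measurable M" "G \<in> borel_measurable M"
    and iFk: "\<And>k. integrable M (\<lambda>x. (norm (F k x - F0 x))^2)"
    and iF: "integrable M (\<lambda>x. (norm (F0 x))^2)" and iG: "integrable M (\<lambda>x. (norm (G x))^2)"
    and lim: "(\<lambda>k. integral\<^sup>L M (\<lambda>x. (norm (F k x - F0 x))^2)) \<longlonglongrightarrow> 0"
  shows "(\<lambda>k. integral\<^sup>L M (\<lambda>x. F k x \<bullet> G x)) \<longlonglongrightarrow> integral\<^sup>L M (\<lambda>x. F0 x \<bullet> G x)"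
proof -
  have i1: "integrable M (\<lambda>x. (F k x - F0 x) \<bullet> G x)" for k
    by (rule L2_inner(1)) (use iFk iG in auto)
  have i2: "integrable M (\<lambda>x. F0 x \<bullet> G x)"
    by (rule L2_inner(1)) (use iF iG in auto)
  have eq: "integral\<^sup>L M (\<lambda>x. F k x \<bullet> G x) - integral\<^sup>L M (\<lambda>x. F0 x \<bullet> G x) = integral\<^sup>L M (\<lambda>x. (F k x - F0 x) \<bullet> G x)" for k
  proof -
    have "integral\<^sup>L M (\<lambda>x. F k x \<bullet> G x) = integral\<^sup>L M (\<lambda>x. (F k x - F0 x) \<bullet> G x + F0 x \<bullet> G x)"
      by (simp add: inner_diff_left)
    also have "\<dots> = integral\<^sup>L M (\<lambda>x. (F k x - F0 x) \<bullet> G x) + integral\<^sup>L M (\<lambda>x. F0 x \<bullet> G x)"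
      by (rule Bochner_Integration.integral_add[OF i1 i2])
    finally show ?thesis by simp
  qed
  have bnd: "norm (integral\<^sup>L M (\<lambda>x. F k x \<bullet> G x) - integral\<^sup>L M (\<lambda>x. F0 x \<bullet> G x))
     \<le> sqrt (integral\<^sup>L M (\<lambda>x. (norm (F k x - F0 x))^2)) * sqrt (integral\<^sup>L M (\<lambda>x. (norm (G x))^2))" for k
    unfolding eq real_norm_def by (rule L2_inner(2)) (use iFk iG in auto)
  have "(\<lambda>k. sqrt (integral\<^sup>L M (\<lambda>x. (norm (F k x - F0 x))^2)) * sqrt (integral\<^sup>L M (\<lambda>x. (norm (G x))^2))) \<longlonglongrightarrow> sqrt 0 * sqrt (integral\<^sup>L M (\<lambda>x. (norm (G x))^2))"
    by (intro tendsto_intros lim)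
  hence "(\<lambda>k. sqrt (integral\<^sup>L M (\<lambda>x. (norm (F k x - F0 x))^2)) * sqrt (integral\<^sup>L M (\<lambda>x. (norm (G x))^2))) \<longlonglongrightarrow> 0"
    by simp
  hence "(\<lambda>k. integral\<^sup>L M (\<lambda>x. F k x \<bullet> G x) - integral\<^sup>L M (\<lambda>x. F0 x \<bullet> G x)) \<longlonglongrightarrow> 0"
    by (rule Lim_null_comparison[rotated]) (use bnd in auto)
  thus ?thesis by (rule LIM_zero_cancel)
qed

lemma set_conv:
  fixes \<Omega> :: "'a::euclidean_space set" and f g :: "'a \<Rightarrow> 'b::{banach, second_countable_topology}"
  assumes "open \<Omega>"
  shows "set_borel_measurable lborel \<Omega> f \<longleftrightarrow> f \<in> borel_measurable (restrict_space lborel \<Omega>)"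
    and "set_integrable lborel \<Omega> g \<longleftrightarrow> integrable (restrict_space lborel \<Omega>) g"
    and "set_lebesgue_integral lborel \<Omega> g = integral\<^sup>L (restrict_space lborel \<Omega>) g"
    and "(AE x in lborel. x \<in> \<Omega> \<longrightarrow> P x) \<longleftrightarrow> (AE x in restrict_space lborel \<Omega>. P x)"
proof -
  have S: "\<Omega> \<inter> space lborel \<in> sets lborel" using assms by simp
  show "set_borel_measurable lborel \<Omega> f \<longleftrightarrow> f \<in> borel_measurable (restrict_space lborel \<Omega>)"
    unfolding set_borel_measurable_def by (rule borel_measurable_restrict_space_iff[OF S, symmetric])
  show "set_integrable lborel \<Omega> g \<longleftrightarrow> integrable (restrict_space lborel \<Omega>) g"
    unfolding set_integrable_def by (rule integrable_restrict_space[OF S, symmetric])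
  show "set_lebesgue_integral lborel \<Omega> g = integral\<^sup>L (restrict_space lborel \<Omega>) g"
    unfolding set_lebesgue_integral_def by (rule integral_restrict_space[OF S, symmetric])
  show "(AE x in lborel. x \<in> \<Omega> \<longrightarrow> P x) \<longleftrightarrow> (AE x in restrict_space lborel \<Omega>. P x)"
    by (rule AE_restrict_space_iff[OF S, symmetric])
qed

lemma int_restrict:
  fixes f :: "'a::euclidean_space \<Rightarrow> 'b::{banach, second_countable_topology}"
  assumes "open \<Omega>" "integrable lborel f"
  shows "integrable (restrict_space lborel \<Omega>) f"
proof -
  have S: "\<Omega> \<inter> space lborel \<in> sets lborel" using assms by simp
  show ?thesis unfolding integrable_restrict_space[OF S]
    by (rule integrable_mult_indicator) (use assms in auto)
qed

lemma cs_integrable: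
  fixes f :: "'a::euclidean_space \<Rightarrow> real"
  assumes "compact K" "continuous_on UNIV f" "\<And>x. x \<notin> K \<Longrightarrow> f x = 0"
  shows "integrable lborel f"
proof -
  have "integrable lborel (\<lambda>x. indicat_real K x *\<^sub>R f x)"
    by (rule borel_integrable_compact) (use assms continuous_on_subset[OF assms(2)] in auto)
  also have "(\<lambda>x. indicat_real K x *\<^sub>R f x) = f"
    using assms(3) by (force simp: indicator_def)
  finally show ?thesis .
qed

lemma Cinf_differentiable: "Cinf f \<Longrightarrow> f differentiable (at x)"
  by (erule Cinf.cases) auto

lemma Cinf_pdiff: "Cinf f \<Longrightarrow> Cinf (pdiff f i)"
  by (erule Cinf.cases) auto

lemma Cinf_cont: "Cinf f \<Longrightarrow> continuous_on UNIV f"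
  by (meson Cinf_differentiable continuous_at_imp_continuous_on differentiable_imp_continuous_within)

lemma Cinf_borel[measurable]: "Cinf f \<Longrightarrow> f \<in> borel_measurable borel"
  by (rule borel_measurable_continuous_onI[OF Cinf_cont])

lemma pdiff_has: "f differentiable (at x) \<Longrightarrow> (f has_derivative frechet_derivative f (at x)) (at x)"
  using frechet_derivative_works by blast

lemma pdiff_eqI: "(f has_derivative f') (at x) \<Longrightarrow> pdiff f i x = f' (axis i 1)"
  unfolding pdiff_def using frechet_derivative_at by metis

lemma pdiff_lin:
  assumes "f differentiable (at x)" "g differentiable (at x)"
  shows "pdiff (\<lambda>y. f y + c * g y) i x = pdiff f i x + c * pdiff g i x"
proof -
  have "((\<lambda>y. f y + c * g y) has_derivative (\<lambda>h. frechet_derivative f (at x) h + c * frechet_derivative g (at x) h)) (at x)"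
    by (intro derivative_intros pdiff_has assms)
  from pdiff_eqI[OF this] show ?thesis unfolding pdiff_def by simp
qed

lemma pdiff_cmult:
  assumes "f differentiable (at x)"
  shows "pdiff (\<lambda>y. c * f y) i x = c * pdiff f i x"
proof -
  have "((\<lambda>y. c * f y) has_derivative (\<lambda>h. c * frechet_derivative f (at x) h)) (at x)"
    by (intro derivative_intros pdiff_has assms)
  from pdiff_eqI[OF this] show ?thesis unfolding pdiff_def by simp
qed

lemma pdiff_mult:
  assumes "f differentiable (at x)" "g differentiable (at x)"
  shows "pdiff (\<lambda>y. f y * g y) i x = pdiff f i x * g x + f x * pdiff g i x"
proof -
  have "((\<lambda>y. f y * g y) has_derivative (\<lambda>h. f x * frechet_derivative g (at x) h + frechet_derivative f (at x) h * g x)) (at x)"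
    by (intro derivative_intros pdiff_has assms)
  from pdiff_eqI[OF this] show ?thesis unfolding pdiff_def by simp
qed

lemma zero_outside_closure:
  assumes "x \<notin> closure {y. f y \<noteq> (0::'b::zero)}" shows "f x = 0"
proof (rule ccontr)
  assume "f x \<noteq> 0"
  hence "x \<in> {y. f y \<noteq> 0}" by simp
  hence "x \<in> closure {y. f y \<noteq> 0}" using closure_subset[of "{y. f y \<noteq> 0}"] by (rule subsetD[rotated])
  with assms show False by simp
qed

lemma pdiff_zero_outside:
  assumes "x \<notin> closure {y. f y \<noteq> 0}"
  shows "pdiff f i x = 0"
proof -
  have "((\<lambda>y. 0::real) has_derivative (\<lambda>h. 0)) (at x)" by simp
  hence "(f has_derivative (\<lambda>h. 0)) (at x)"
  proof (rule has_derivative_transform_within_open[where s="- closure {y. f y \<noteq> 0}"])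
    show "open (- closure {y. f y \<noteq> 0})" by (rule open_Compl[OF closed_closure])
    show "x \<in> - closure {y. f y \<noteq> 0}" using assms by simp
    show "0 = f y" if "y \<in> - closure {y. f y \<noteq> 0}" for y
      using zero_outside_closure[of y f] that by simp
  qed
  from pdiff_eqI[OF this] show ?thesis .
qed

lemma Cinf_cmult: "Cinf f \<Longrightarrow> Cinf (\<lambda>x. c * f x)"
proof -
  assume "Cinf f"
  hence X: "\<exists>g. (\<lambda>x. c * f x) = (\<lambda>x. c * g x) \<and> Cinf g" by blast
  show ?thesis
  proof (rule Cinf.coinduct[of "\<lambda>h. \<exists>g. h = (\<lambda>x. c * g x) \<and> Cinf g", OF X])
    fix h assume "\<exists>g. h = (\<lambda>x. c * g x) \<and> Cinf g"
    then obtain g where h: "h = (\<lambda>x. c * g x)" and g: "Cinf g" by blast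
    have d: "\<And>x. g differentiable (at x)" using g Cinf_differentiable by blast
    have "pdiff h i = (\<lambda>x. c * pdiff g i x)" for i
      unfolding h by (rule ext) (rule pdiff_cmult[OF d])
    with d g Cinf_pdiff show "\<exists>f. h = f \<and> (\<forall>x. f differentiable at x) \<and> (\<forall>i. (\<exists>g. pdiff f i = (\<lambda>x. c * g x) \<and> Cinf g) \<or> Cinf (pdiff f i))"
      unfolding h by (auto intro!: derivative_intros)
  qed
qed

lemma line_deriv:
  fixes h :: "'a::euclidean_space \<Rightarrow> real"
  assumes d: "h differentiable (at (x + s *\<^sub>R e))"
  shows "((\<lambda>t. h (x + t *\<^sub>R e)) has_real_derivative frechet_derivative h (at (x + s *\<^sub>R e)) e) (at s)"
proof -
  have l: "((\<lambda>t. x + t *\<^sub>R e) has_derivative (\<lambda>t. t *\<^sub>R e)) (at s)"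
    by (intro derivative_eq_intros) auto
  have c: "((\<lambda>t. h (x + t *\<^sub>R e)) has_derivative (\<lambda>t. frechet_derivative h (at (x + s *\<^sub>R e)) (t *\<^sub>R e))) (at s)"
    using has_derivative_compose[OF l pdiff_has[OF d]] by simp
  have lin: "linear (frechet_derivative h (at (x + s *\<^sub>R e)))"
    using linear_frechet_derivative[OF d] .
  have "(\<lambda>t. frechet_derivative h (at (x + s *\<^sub>R e)) (t *\<^sub>R e)) = (*) (frechet_derivative h (at (x + s *\<^sub>R e)) e)"
    using linear_cmul[OF lin] by (auto simp: fun_eq_iff)
  with c show ?thesis unfolding has_field_derivative_def by simp
qed

lemma ibp_zero:
  fixes h :: "real^'n \<Rightarrow> real"
  assumes diff: "\<And>x. h differentiable (at x)" and cont: "continuous_on UNIV (pdiff h i)"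
    and K: "compact K" "\<And>x. x \<notin> K \<Longrightarrow> h x = 0"
  shows "integral\<^sup>L lborel (pdiff h i) = 0"
proof -
  define e :: "real^'n" where "e = axis i 1"
  have ne: "norm e = 1" unfolding e_def by (simp add: norm_axis_1)
  have hcont: "continuous_on UNIV h"
    by (meson diff continuous_at_imp_continuous_on differentiable_imp_continuous_within)
  have [measurable]: "h \<in> borel_measurable borel" by (rule borel_measurable_continuous_onI[OF hcont])
  have [measurable]: "pdiff h i \<in> borel_measurable borel" by (rule borel_measurable_continuous_onI[OF cont])
  have supK: "closure {x. h x \<noteq> 0} \<subseteq> K"
    by (rule closure_minimal) (use K compact_imp_closed in auto)
  have pz: "x \<notin> K \<Longrightarrow> pdiff h i x = 0" for x
    using pdiff_zero_outside supK by blast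
  obtain B0 where B0: "\<And>y. y \<in> pdiff h i ` K \<Longrightarrow> norm y \<le> B0"
    using compact_imp_bounded[OF compact_continuous_image[OF continuous_on_subset[OF cont] K(1)]]
    unfolding bounded_iff by blast
  define B where "B = max B0 0"
  have Bx: "\<bar>pdiff h i x\<bar> \<le> B" for x
  proof (cases "x \<in> K")
    case True thus ?thesis using B0[of "pdiff h i x"] unfolding B_def by force
  next
    case False
    thus ?thesis using pz unfolding B_def by simp
  qed
  obtain R where R: "\<And>x. x \<in> K \<Longrightarrow> norm x \<le> R"
    using compact_imp_bounded[OF K(1)] unfolding bounded_iff by blast
  have pe: "pdiff h i y = frechet_derivative h (at y) e" for y unfolding pdiff_def e_def ..
  have mvt: "\<bar>h (x + s *\<^sub>R e) - h x\<bar> \<le> B * \<bar>s\<bar>" for x s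
  proof -
    have "norm ((\<lambda>t. h (x + t *\<^sub>R e)) s - (\<lambda>t. h (x + t *\<^sub>R e)) 0) \<le> B * norm (s - 0)"
    proof (rule field_differentiable_bound[where S=UNIV and f'="\<lambda>t. pdiff h i (x + t *\<^sub>R e)"])
      show "((\<lambda>t. h (x + t *\<^sub>R e)) has_field_derivative pdiff h i (x + z *\<^sub>R e)) (at z within UNIV)" for z
        unfolding pe using line_deriv[OF diff] by simp
      show "norm (pdiff h i (x + z *\<^sub>R e)) \<le> B" for z using Bx by simp
    qed auto
    thus ?thesis by simp
  qed
  define s :: "nat \<Rightarrow> real" where "s k = 1 / (Suc k)" for k
  have s0: "s k \<noteq> 0" "0 < s k" "s k \<le> 1" for k unfolding s_def by auto
  have slim: "s \<longlonglongrightarrow> 0" unfolding s_def using LIMSEQ_Suc[OF lim_inverse_n] by (simp add: inverse_eq_divide)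
  define D where "D k x = (h (x + s k *\<^sub>R e) - h x) / s k" for k x
  have [measurable]: "D k \<in> borel_measurable lborel" for k
    unfolding D_def by measurable
  have intD: "integral\<^sup>L lborel (D k) = 0" for k
  proof -
    have ih: "integrable lborel h"
      by (rule cs_integrable[OF K(1) hcont K(2)])
    have "integral\<^sup>L lborel (\<lambda>x. h (s k *\<^sub>R e + x)) = integral\<^sup>L (distr lborel borel ((+) (s k *\<^sub>R e))) h"
      by (subst integral_distr) auto
    also have "\<dots> = integral\<^sup>L lborel h" by (simp add: lborel_distr_plus)
    finally have tr: "integral\<^sup>L lborel (\<lambda>x. h (x + s k *\<^sub>R e)) = integral\<^sup>L lborel h" by (simp add: add.commute)
    have ih2: "integrable lborel (\<lambda>x. h (x + s k *\<^sub>R e))"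
    proof -
      have "integrable (distr lborel borel ((+) (s k *\<^sub>R e))) h" using ih by (simp add: lborel_distr_plus)
      hence "integrable lborel (\<lambda>x. h (s k *\<^sub>R e + x))" by (subst (asm) integrable_distr_eq) auto
      thus ?thesis by (simp add: add.commute)
    qed
    have "integral\<^sup>L lborel (D k) = (integral\<^sup>L lborel (\<lambda>x. h (x + s k *\<^sub>R e)) - integral\<^sup>L lborel h) / s k"
      unfolding D_def using ih ih2 by simp
    thus ?thesis using tr by simp
  qed
  have ptw: "(\<lambda>k. D k x) \<longlonglongrightarrow> pdiff h i x" for x
  proof -
    have "((\<lambda>t. h (x + t *\<^sub>R e)) has_real_derivative pdiff h i x) (at 0)"
      unfolding pe using line_deriv[where h=h and x=x and s=0 and e=e, OF diff] by simp
    hence "((\<lambda>t. (h (x + (0 + t) *\<^sub>R e) - h (x + 0 *\<^sub>R e)) / t) \<longlongrightarrow> pdiff h i x) (at 0)"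
      unfolding DERIV_def .
    hence "((\<lambda>t. (h (x + t *\<^sub>R e) - h x) / t) \<longlongrightarrow> pdiff h i x) (at 0)" by simp
    hence "((\<lambda>t. (h (x + t *\<^sub>R e) - h x) / t) \<circ> s) \<longlonglongrightarrow> pdiff h i x"
      unfolding tendsto_at_iff_sequentially using s0 slim by auto
    thus ?thesis unfolding D_def o_def .
  qed
  have dom: "\<bar>D k x\<bar> \<le> B * indicator (cball 0 (R + 1)) x" for k x
  proof (cases "x \<in> cball 0 (R + 1)")
    case True
    have "\<bar>D k x\<bar> = \<bar>h (x + s k *\<^sub>R e) - h x\<bar> / s k" unfolding D_def using s0[of k] by simp
    also have "\<dots> \<le> B * \<bar>s k\<bar> / s k" using divide_right_mono[OF mvt[of x "s k"], of "s k"] s0[of k] by simp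
    also have "\<dots> = B" using s0[of k] by simp
    finally show ?thesis using True by simp
  next
    case False
    hence nx: "norm x > R + 1" by (simp add: dist_norm)
    have "x \<notin> K" using R nx by fastforce
    moreover have "x + s k *\<^sub>R e \<notin> K"
    proof
      assume "x + s k *\<^sub>R e \<in> K"
      hence "norm (x + s k *\<^sub>R e) \<le> R" by (rule R)
      moreover have "norm x \<le> norm (x + s k *\<^sub>R e) + norm (s k *\<^sub>R e)"
        using norm_triangle_ineq4[of "x + s k *\<^sub>R e" "s k *\<^sub>R e"] by simp
      moreover have "norm (s k *\<^sub>R e) \<le> 1" using ne s0[of k] by simp
      ultimately show False using nx by linarith
    qed
    ultimately show ?thesis using False K(2) unfolding D_def by simp
  qed
  have "(\<lambda>k. integral\<^sup>L lborel (D k)) \<longlonglongrightarrow> integral\<^sup>L lborel (pdiff h i)"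
  proof (rule integral_dominated_convergence[where w="\<lambda>x. B * indicator (cball 0 (R + 1)) x"])
    show "integrable lborel (\<lambda>x. B * indicat_real (cball 0 (R + 1)) x)"
    proof (intro integrable_mult_right)
      have "integrable lborel (\<lambda>x. indicat_real (cball 0 (R+1)) x *\<^sub>R (1::real))"
        by (rule borel_integrable_compact) auto
      thus "integrable lborel (indicat_real (cball 0 (R + 1)))" by simp
    qed
  qed (use ptw dom in auto)
  thus ?thesis using intD by (simp add: LIMSEQ_const_iff)
qed

definition lap :: "(real^'n \<Rightarrow> real) \<Rightarrow> real^'n \<Rightarrow> real" where
  "lap f x = (\<Sum>i\<in>UNIV. pdiff (pdiff f i) i x)"

lemma cont_borel_M:
  fixes f :: "'a::euclidean_space \<Rightarrow> 'b::euclidean_space"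
  assumes "continuous_on UNIV f"
  shows "f \<in> borel_measurable (restrict_space lborel \<Omega>)"
  by (rule measurable_restrict_space1) (simp add: borel_measurable_continuous_onI[OF assms])

lemma cs_M:
  fixes f :: "'a::euclidean_space \<Rightarrow> real"
  assumes "open \<Omega>" "compact K" "K \<subseteq> \<Omega>" "continuous_on UNIV f" "\<And>x. x \<notin> K \<Longrightarrow> f x = 0"
  shows "integrable (restrict_space lborel \<Omega>) f"
    and "integral\<^sup>L (restrict_space lborel \<Omega>) f = integral\<^sup>L lborel f"
proof -
  have S: "\<Omega> \<inter> space lborel \<in> sets lborel" using assms by simp
  have i: "integrable lborel f" by (rule cs_integrable[OF assms(2,4,5)])
  show "integrable (restrict_space lborel \<Omega>) f" by (rule int_restrict[OF assms(1) i])
  have "(\<lambda>x. indicator \<Omega> x *\<^sub>R f x) = f" using assms(3,5) by (force simp: indicator_def)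
  thus "integral\<^sup>L (restrict_space lborel \<Omega>) f = integral\<^sup>L lborel f"
    by (simp add: integral_restrict_space[OF S])
qed

lemma test_facts:
  assumes "test_fun \<Omega> \<phi>"
  shows "Cinf \<phi>" "compact (closure {x. \<phi> x \<noteq> 0})" "closure {x. \<phi> x \<noteq> 0} \<subseteq> \<Omega>"
    "\<And>x. x \<notin> closure {x. \<phi> x \<noteq> 0} \<Longrightarrow> \<phi> x = 0"
    "\<And>x i. x \<notin> closure {x. \<phi> x \<noteq> 0} \<Longrightarrow> pdiff \<phi> i x = 0"
    "\<And>x i j. x \<notin> closure {x. \<phi> x \<noteq> 0} \<Longrightarrow> pdiff (pdiff \<phi> i) j x = 0"
proof -
  show "Cinf \<phi>" "compact (closure {x. \<phi> x \<noteq> 0})" "closure {x. \<phi> x \<noteq> 0} \<subseteq> \<Omega>"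
    using assms unfolding test_fun_def by auto
  show z: "\<phi> x = 0" if "x \<notin> closure {x. \<phi> x \<noteq> 0}" for x
    by (rule zero_outside_closure[OF that])
  show z1: "\<And>x i. x \<notin> closure {x. \<phi> x \<noteq> 0} \<Longrightarrow> pdiff \<phi> i x = 0" by (rule pdiff_zero_outside)
  show "pdiff (pdiff \<phi> i) j x = 0" if x: "x \<notin> closure {x. \<phi> x \<noteq> 0}" for x i j
  proof -
    have sub: "{y. pdiff \<phi> i y \<noteq> 0} \<subseteq> closure {x. \<phi> x \<noteq> 0}"
    proof
      fix y assume "y \<in> {y. pdiff \<phi> i y \<noteq> 0}"
      thus "y \<in> closure {x. \<phi> x \<noteq> 0}" using z1[of y i] by auto
    qed
    have "closure {y. pdiff \<phi> i y \<noteq> 0} \<subseteq> closure {x. \<phi> x \<noteq> 0}"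
      by (rule closure_minimal[OF sub]) simp
    hence "x \<notin> closure {y. pdiff \<phi> i y \<noteq> 0}" using x by (meson subsetD)
    thus "pdiff (pdiff \<phi> i) j x = 0" by (rule pdiff_zero_outside)
  qed
qed

lemma Cinf_grad_cont: "Cinf f \<Longrightarrow> continuous_on UNIV (grad f)"
  unfolding grad_def by (intro continuous_on_vec_lambda Cinf_cont Cinf_pdiff)

lemma ibp_test:
  fixes \<psi> \<phi> :: "real^'n \<Rightarrow> real"
  assumes "Cinf \<psi>" "Cinf \<phi>" "compact K" "\<And>x. x \<notin> K \<Longrightarrow> \<phi> x = 0"
  shows "integral\<^sup>L lborel (\<lambda>x. pdiff \<psi> i x * pdiff \<phi> i x) = - integral\<^sup>L lborel (\<lambda>x. \<psi> x * pdiff (pdiff \<phi> i) i x)"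
proof -
  define g where "g = pdiff \<phi> i"
  have cg: "Cinf g" unfolding g_def by (rule Cinf_pdiff[OF assms(2)])
  have Kc: "closed K" using assms(3) compact_imp_closed by blast
  have s1: "closure {x. \<phi> x \<noteq> 0} \<subseteq> K"
  proof (rule closure_minimal[OF _ Kc])
    show "{x. \<phi> x \<noteq> 0} \<subseteq> K"
    proof
      fix x assume "x \<in> {x. \<phi> x \<noteq> 0}" thus "x \<in> K" using assms(4)[of x] by (cases "x \<in> K") auto
    qed
  qed
  have gz: "x \<notin> K \<Longrightarrow> g x = 0" for x unfolding g_def using pdiff_zero_outside s1 by blast
  have s2: "closure {x. g x \<noteq> 0} \<subseteq> K"
  proof (rule closure_minimal[OF _ Kc])
    show "{x. g x \<noteq> 0} \<subseteq> K"
    proof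
      fix x assume "x \<in> {x. g x \<noteq> 0}" thus "x \<in> K" using gz[of x] by (cases "x \<in> K") auto
    qed
  qed
  have gz2: "x \<notin> K \<Longrightarrow> pdiff g i x = 0" for x using pdiff_zero_outside s2 by blast
  define h where "h x = \<psi> x * g x" for x
  have dp: "\<And>x. \<psi> differentiable (at x)" using Cinf_differentiable assms(1) by blast
  have dg: "\<And>x. g differentiable (at x)" using Cinf_differentiable cg by blast
  have hd: "h differentiable (at x)" for x unfolding h_def using dp dg by (intro derivative_intros) auto
  have ph: "pdiff h i = (\<lambda>x. pdiff \<psi> i x * g x + \<psi> x * pdiff g i x)"
    unfolding h_def by (rule ext) (rule pdiff_mult[OF dp dg])
  have c1: "continuous_on UNIV (\<lambda>x. pdiff \<psi> i x * g x)"
    by (intro continuous_intros Cinf_cont Cinf_pdiff assms cg)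
  have c2: "continuous_on UNIV (\<lambda>x. \<psi> x * pdiff g i x)"
    by (intro continuous_intros Cinf_cont Cinf_pdiff assms cg)
  have i1: "integrable lborel (\<lambda>x. pdiff \<psi> i x * g x)"
    by (rule cs_integrable[OF assms(3) c1]) (simp add: gz)
  have i2: "integrable lborel (\<lambda>x. \<psi> x * pdiff g i x)"
    by (rule cs_integrable[OF assms(3) c2]) (simp add: gz2)
  have "integral\<^sup>L lborel (pdiff h i) = 0"
  proof (rule ibp_zero[OF hd _ assms(3)])
    show "continuous_on UNIV (pdiff h i)" unfolding ph by (intro continuous_intros c1 c2)
    show "\<And>x. x \<notin> K \<Longrightarrow> h x = 0" unfolding h_def using gz by simp
  qed
  hence "integral\<^sup>L lborel (\<lambda>x. pdiff \<psi> i x * g x) + integral\<^sup>L lborel (\<lambda>x. \<psi> x * pdiff g i x) = 0"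
    unfolding ph using i1 i2 by simp
  thus ?thesis unfolding g_def by linarith
qed

lemma sq_diff_int:
  fixes F G :: "'a \<Rightarrow> 'b::euclidean_space"
  assumes [measurable]: "F \<in> borel_measurable M" "G \<in> borel_measurable M"
    and "integrable M (\<lambda>x. (norm (F x))^2)" "integrable M (\<lambda>x. (norm (G x))^2)"
  shows "integrable M (\<lambda>x. (norm (F x - G x))^2)"
proof (rule Bochner_Integration.integrable_bound[OF Bochner_Integration.integrable_add[OF integrable_mult_right[OF assms(3)] integrable_mult_right[OF assms(4)]]])
  show "AE x in M. norm ((norm (F x - G x))^2) \<le> norm (2 * (norm (F x))^2 + 2 * (norm (G x))^2)"
  proof (rule AE_I2)
    fix x
    have "norm (F x - G x) \<le> norm (F x) + norm (G x)" by (rule norm_triangle_ineq4)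
    hence "(norm (F x - G x))^2 \<le> (norm (F x) + norm (G x))^2" by (simp add: power_mono)
    also have "\<dots> \<le> 2 * (norm (F x))^2 + 2 * (norm (G x))^2"
      using zero_le_square[of "norm (F x) - norm (G x)"] by (simp add: power2_eq_square algebra_simps)
    finally show "norm ((norm (F x - G x))^2) \<le> norm (2 * (norm (F x))^2 + 2 * (norm (G x))^2)" by simp
  qed
qed measurable

lemma H01_unfold:
  fixes \<Omega> :: "(real^'n) set"
  assumes "open \<Omega>" "H01 \<Omega> u G"
  shows "u \<in> borel_measurable (restrict_space lborel \<Omega>)" "G \<in> borel_measurable (restrict_space lborel \<Omega>)"
    "integrable (restrict_space lborel \<Omega>) (\<lambda>x. (u x)^2)"
    "integrable (restrict_space lborel \<Omega>) (\<lambda>x. (norm (G x))^2)"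
    "\<exists>\<psi>. (\<forall>k. test_fun \<Omega> (\<psi> k)) \<and>
        (\<lambda>k. integral\<^sup>L (restrict_space lborel \<Omega>) (\<lambda>x. (\<psi> k x - u x)^2)) \<longlonglongrightarrow> 0 \<and>
        (\<lambda>k. integral\<^sup>L (restrict_space lborel \<Omega>) (\<lambda>x. (norm (grad (\<psi> k) x - G x))^2)) \<longlonglongrightarrow> 0"
  using assms(2) unfolding H01_def set_conv[OF assms(1)] by auto

lemma lap_facts:
  assumes "test_fun \<Omega> \<phi>"
  shows "continuous_on UNIV (lap \<phi>)" "\<And>x. x \<notin> closure {x. \<phi> x \<noteq> 0} \<Longrightarrow> lap \<phi> x = 0"
proof -
  have c: "Cinf \<phi>" using test_facts(1)[OF assms] .
  show "continuous_on UNIV (lap \<phi>)" unfolding lap_def[abs_def]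
    by (intro continuous_intros Cinf_cont Cinf_pdiff c)
  show "\<And>x. x \<notin> closure {x. \<phi> x \<noteq> 0} \<Longrightarrow> lap \<phi> x = 0"
    unfolding lap_def using test_facts(6)[OF assms] by simp
qed

lemma grad_zero: "x \<notin> closure {x. \<phi> x \<noteq> 0} \<Longrightarrow> grad \<phi> x = 0"
  unfolding grad_def by (simp add: vec_eq_iff pdiff_zero_outside)

lemma ibp_grad:
  fixes \<Omega> :: "(real^'n) set"
  assumes "open \<Omega>" "Cinf \<psi>" "test_fun \<Omega> \<phi>"
  shows "integral\<^sup>L (restrict_space lborel \<Omega>) (\<lambda>x. grad \<psi> x \<bullet> grad \<phi> x)
     = - integral\<^sup>L (restrict_space lborel \<Omega>) (\<lambda>x. \<psi> x * lap \<phi> x)"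
proof -
  let ?K = "closure {x. \<phi> x \<noteq> 0}"
  note tf = test_facts[OF assms(3)]
  have cg: "continuous_on UNIV (\<lambda>x. grad \<psi> x \<bullet> grad \<phi> x)"
    by (intro continuous_intros Cinf_grad_cont assms(2) tf(1))
  have cl: "continuous_on UNIV (\<lambda>x. \<psi> x * lap \<phi> x)"
    by (intro continuous_intros Cinf_cont assms(2) lap_facts[OF assms(3)])
  have e1: "integral\<^sup>L (restrict_space lborel \<Omega>) (\<lambda>x. grad \<psi> x \<bullet> grad \<phi> x) = integral\<^sup>L lborel (\<lambda>x. grad \<psi> x \<bullet> grad \<phi> x)"
    by (rule cs_M(2)[OF assms(1) tf(2) tf(3) cg]) (simp add: grad_zero)
  have e2: "integral\<^sup>L (restrict_space lborel \<Omega>) (\<lambda>x. \<psi> x * lap \<phi> x) = integral\<^sup>L lborel (\<lambda>x. \<psi> x * lap \<phi> x)"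
    by (rule cs_M(2)[OF assms(1) tf(2) tf(3) cl]) (simp add: lap_facts(2)[OF assms(3)])
  have ii: "integrable lborel (\<lambda>x. pdiff \<psi> i x * pdiff \<phi> i x)" for i
    by (rule cs_integrable[OF tf(2) continuous_on_mult[OF Cinf_cont[OF Cinf_pdiff[OF assms(2)]] Cinf_cont[OF Cinf_pdiff[OF tf(1)]]]]) (simp add: tf(5))
  have ij: "integrable lborel (\<lambda>x. \<psi> x * pdiff (pdiff \<phi> i) i x)" for i
    by (rule cs_integrable[OF tf(2) continuous_on_mult[OF Cinf_cont[OF assms(2)] Cinf_cont[OF Cinf_pdiff[OF Cinf_pdiff[OF tf(1)]]]]]) (simp add: tf(6))
  have "integral\<^sup>L lborel (\<lambda>x. grad \<psi> x \<bullet> grad \<phi> x) = integral\<^sup>L lborel (\<lambda>x. \<Sum>i\<in>UNIV. pdiff \<psi> i x * pdiff \<phi> i x)"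
    unfolding grad_def inner_vec_def by simp
  also have "\<dots> = (\<Sum>i\<in>UNIV. integral\<^sup>L lborel (\<lambda>x. pdiff \<psi> i x * pdiff \<phi> i x))"
    by (rule Bochner_Integration.integral_sum) (use ii in auto)
  also have "\<dots> = (\<Sum>i\<in>UNIV. - integral\<^sup>L lborel (\<lambda>x. \<psi> x * pdiff (pdiff \<phi> i) i x))"
    by (rule sum.cong[OF refl]) (rule ibp_test[OF assms(2) tf(1) tf(2) tf(4)])
  also have "\<dots> = - integral\<^sup>L lborel (\<lambda>x. \<Sum>i\<in>UNIV. \<psi> x * pdiff (pdiff \<phi> i) i x)"
    by (subst Bochner_Integration.integral_sum) (use ij in \<open>auto simp: sum_negf\<close>)
  also have "\<dots> = - integral\<^sup>L lborel (\<lambda>x. \<psi> x * lap \<phi> x)"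
    unfolding lap_def by (simp add: sum_distrib_left)
  finally show ?thesis using e1 e2 by simp
qed

lemma WD:
  fixes \<Omega> :: "(real^'n) set"
  assumes "open \<Omega>" "H01 \<Omega> u G" "test_fun \<Omega> \<phi>"
  shows "integral\<^sup>L (restrict_space lborel \<Omega>) (\<lambda>x. G x \<bullet> grad \<phi> x)
     = - integral\<^sup>L (restrict_space lborel \<Omega>) (\<lambda>x. u x * lap \<phi> x)"
proof -
  let ?M = "restrict_space lborel \<Omega>"
  note H = H01_unfold[OF assms(1,2)]
  note tf = test_facts[OF assms(3)]
  obtain \<psi> where tk: "\<And>k. test_fun \<Omega> (\<psi> k)"
    and l1: "(\<lambda>k. integral\<^sup>L ?M (\<lambda>x. (\<psi> k x - u x)^2)) \<longlonglongrightarrow> 0"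
    and l2: "(\<lambda>k. integral\<^sup>L ?M (\<lambda>x. (norm (grad (\<psi> k) x - G x))^2)) \<longlonglongrightarrow> 0"
    using H(5) by blast
  have ck: "Cinf (\<psi> k)" for k using test_facts(1)[OF tk] .
  have [measurable]: "u \<in> borel_measurable ?M" "G \<in> borel_measurable ?M" using H(1,2) by auto
  have [measurable]: "\<psi> k \<in> borel_measurable ?M" for k by (rule cont_borel_M[OF Cinf_cont[OF ck]])
  have [measurable]: "grad (\<psi> k) \<in> borel_measurable ?M" for k by (rule cont_borel_M[OF Cinf_grad_cont[OF ck]])
  have [measurable]: "grad \<phi> \<in> borel_measurable ?M" by (rule cont_borel_M[OF Cinf_grad_cont[OF tf(1)]])
  have [measurable]: "lap \<phi> \<in> borel_measurable ?M" by (rule cont_borel_M[OF lap_facts(1)[OF assms(3)]])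
  have ipk: "integrable ?M (\<lambda>x. (\<psi> k x)^2)" for k
    by (rule cs_M(1)[OF assms(1) test_facts(2,3)[OF tk[of k]] continuous_on_power[OF Cinf_cont[OF ck]]])
       (metis test_facts(4)[OF tk] zero_power2)
  have igk: "integrable ?M (\<lambda>x. (norm (grad (\<psi> k) x))^2)" for k
    by (rule cs_M(1)[OF assms(1) test_facts(2,3)[OF tk[of k]] continuous_on_power[OF continuous_on_norm[OF Cinf_grad_cont[OF ck]]]])
       (simp add: grad_zero)
  have igp: "integrable ?M (\<lambda>x. (norm (grad \<phi> x))^2)"
    by (rule cs_M(1)[OF assms(1) tf(2,3) continuous_on_power[OF continuous_on_norm[OF Cinf_grad_cont[OF tf(1)]]]])
       (simp add: grad_zero)
  have ilp: "integrable ?M (\<lambda>x. (lap \<phi> x)^2)"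
    by (rule cs_M(1)[OF assms(1) tf(2,3) continuous_on_power[OF lap_facts(1)[OF assms(3)]]])
       (simp add: lap_facts(2)[OF assms(3)])
  have A: "integral\<^sup>L ?M (\<lambda>x. grad (\<psi> k) x \<bullet> grad \<phi> x) = - integral\<^sup>L ?M (\<lambda>x. \<psi> k x * lap \<phi> x)" for k
    by (rule ibp_grad[OF assms(1) ck assms(3)])
  have B: "(\<lambda>k. integral\<^sup>L ?M (\<lambda>x. grad (\<psi> k) x \<bullet> grad \<phi> x)) \<longlonglongrightarrow> integral\<^sup>L ?M (\<lambda>x. G x \<bullet> grad \<phi> x)"
    by (rule L2_conv[OF _ _ _ sq_diff_int[OF _ _ igk H(4)] H(4) igp l2]) measurable
  have ipk': "integrable ?M (\<lambda>x. (norm (\<psi> k x))^2)" for k using ipk by simp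
  have iu': "integrable ?M (\<lambda>x. (norm (u x))^2)" using H(3) by simp
  have ilp': "integrable ?M (\<lambda>x. (norm (lap \<phi> x))^2)" using ilp by simp
  have l1': "(\<lambda>k. integral\<^sup>L ?M (\<lambda>x. (norm (\<psi> k x - u x))^2)) \<longlonglongrightarrow> 0" using l1 by simp
  have C: "(\<lambda>k. integral\<^sup>L ?M (\<lambda>x. \<psi> k x \<bullet> lap \<phi> x)) \<longlonglongrightarrow> integral\<^sup>L ?M (\<lambda>x. u x \<bullet> lap \<phi> x)"
    by (rule L2_conv[OF _ _ _ sq_diff_int[OF _ _ ipk' iu'] iu' ilp' l1']) measurable
  hence C': "(\<lambda>k. integral\<^sup>L ?M (\<lambda>x. grad (\<psi> k) x \<bullet> grad \<phi> x)) \<longlonglongrightarrow> - integral\<^sup>L ?M (\<lambda>x. u x * lap \<phi> x)"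
    unfolding A inner_real_def by (intro tendsto_intros)
  show ?thesis using LIMSEQ_unique[OF B C'] .
qed

lemma K4:
  fixes \<Omega> :: "(real^'n) set" and F :: "real^'n \<Rightarrow> real^'n"
  assumes "open \<Omega>" "H01 \<Omega> u G"
    and [measurable]: "F \<in> borel_measurable (restrict_space lborel \<Omega>)"
    and iF: "integrable (restrict_space lborel \<Omega>) (\<lambda>x. (norm (F x))^2)"
    and orth: "\<And>\<phi>. test_fun \<Omega> \<phi> \<Longrightarrow> integral\<^sup>L (restrict_space lborel \<Omega>) (\<lambda>x. F x \<bullet> grad \<phi> x) = 0"
  shows "integral\<^sup>L (restrict_space lborel \<Omega>) (\<lambda>x. G x \<bullet> F x) = 0"
proof -
  let ?M = "restrict_space lborel \<Omega>"
  note H = H01_unfold[OF assms(1,2)]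
  obtain \<psi> where tk: "\<And>k. test_fun \<Omega> (\<psi> k)"
    and l2: "(\<lambda>k. integral\<^sup>L ?M (\<lambda>x. (norm (grad (\<psi> k) x - G x))^2)) \<longlonglongrightarrow> 0"
    using H(5) by blast
  have ck: "Cinf (\<psi> k)" for k using test_facts(1)[OF tk] .
  have [measurable]: "G \<in> borel_measurable ?M" using H(2) .
  have [measurable]: "grad (\<psi> k) \<in> borel_measurable ?M" for k by (rule cont_borel_M[OF Cinf_grad_cont[OF ck]])
  have igk: "integrable ?M (\<lambda>x. (norm (grad (\<psi> k) x))^2)" for k
    by (rule cs_M(1)[OF assms(1) test_facts(2,3)[OF tk[of k]] continuous_on_power[OF continuous_on_norm[OF Cinf_grad_cont[OF ck]]]])
       (simp add: grad_zero)
  have B: "(\<lambda>k. integral\<^sup>L ?M (\<lambda>x. grad (\<psi> k) x \<bullet> F x)) \<longlonglongrightarrow> integral\<^sup>L ?M (\<lambda>x. G x \<bullet> F x)"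
    by (rule L2_conv[OF _ _ _ sq_diff_int[OF _ _ igk H(4)] H(4) iF l2]) measurable
  have "integral\<^sup>L ?M (\<lambda>x. grad (\<psi> k) x \<bullet> F x) = 0" for k
    using orth[OF tk[of k]] by (simp add: inner_commute)
  with B show ?thesis by (simp add: LIMSEQ_const_iff)
qed
lemma ex1: "d1 \<noteq> 0 \<Longrightarrow> d2 \<noteq> (0::real) \<Longrightarrow> lm + (d2 / d1) * (la + ((d2 - d1) / d2) * lm - ll) = (- d2) * ((ll - la - lm) / d1)"
  by (simp add: field_simps)
lemma ex2: "d1 \<noteq> 0 \<Longrightarrow> d2 \<noteq> (0::real) \<Longrightarrow> lm + ((d2 - 2) / d1) * (la + ((d2 - d1) / d2) * lm - ll) + (2 / (- d2)) * lm = (2 - d2) * ((ll - la - lm) / d1)"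
  by (simp add: field_simps)
lemma ex1p: "p - q \<noteq> 0 \<Longrightarrow> p - 2 \<noteq> (0::real) \<Longrightarrow> lm + ((p - 2) / (p - q)) * (la + ((q - 2) / (p - 2)) * lm - ll) = (2 - p) * ((ll - la - lm) / (p - q))"
proof -
  assume a: "p - q \<noteq> 0" "p - 2 \<noteq> 0"
  have h: "q - 2 = (p - 2) - (p - q)" "2 - p = - (p - 2)" by simp_all
  show ?thesis unfolding h by (rule ex1[OF a])
qed
lemma ex2p: "p - q \<noteq> 0 \<Longrightarrow> p - 2 \<noteq> (0::real) \<Longrightarrow> lm + ((p - 4) / (p - q)) * (la + ((q - 2) / (p - 2)) * lm - ll) + (2 / (2 - p)) * lm = (4 - p) * ((ll - la - lm) / (p - q))"
proof -
  assume a: "p - q \<noteq> 0" "p - 2 \<noteq> 0"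
  have h: "q - 2 = (p - 2) - (p - q)" "2 - p = - (p - 2)" "p - 4 = (p - 2) - 2" "4 - p = 2 - (p - 2)" by simp_all
  show ?thesis unfolding h by (rule ex2[OF a])
qed

lemma exp_mult_eq: "exp (x::real) * exp y = exp (x + y)" by (simp add: exp_add)

lemma ALG:
  fixes a b lam mu \<alpha> p q D :: real
  assumes "2 \<le> q" "q < p" "a > 0" "b > 0" "lam > 0" "mu > 0" "\<alpha> > 0"
  defines "t \<equiv> (lam / (\<alpha> * mu)) powr (1 / (p - q))"
  shows "(a * (\<alpha> * mu powr ((q - 2) / (p - 2)) / lam) powr ((p - 2) / (p - q)) +
     b * (\<alpha> * mu powr ((q - 2) / (p - 2)) / lam) powr ((p - 4) / (p - q)) * mu powr (2 / (2 - p)) * D = 1)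
     \<longleftrightarrow> ((a + b * (t^2 * D)) * t = mu * t powr (p - 1))"
proof -
  have pq: "p - q \<noteq> 0" "p - 2 \<noteq> 0" "2 - p \<noteq> 0" using assms by auto
  define L where "L = (ln lam - ln \<alpha> - ln mu) / (p - q)"
  have tL: "t = exp L"
    unfolding t_def L_def using assms by (simp add: powr_def ln_div ln_mult field_simps)
  define ls where "ls = ln \<alpha> + ((q - 2) / (p - 2)) * ln mu - ln lam"
  have sp: "(\<alpha> * mu powr ((q - 2) / (p - 2)) / lam) powr e = exp (e * ls)" for e
    unfolding ls_def using assms by (simp add: powr_def ln_div ln_mult)
  have mp: "mu powr e = exp (e * ln mu)" for e using assms by (simp add: powr_def)
  have mu: "mu = exp (ln mu)" using assms by simp
  have tp: "t powr e = exp (e * L)" for e unfolding tL by (simp add: powr_def)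
  have t2: "t^2 = exp (2 * L)" unfolding tL using exp_of_nat_mult[of 2 L] by simp
  have e1: "mu * exp (((p - 2) / (p - q)) * ls) = exp ((2 - p) * L)"
  proof -
    have "mu * exp (((p - 2) / (p - q)) * ls) = exp (ln mu + ((p - 2) / (p - q)) * ls)"
      by (subst mu) (simp add: exp_add)
    also have "ln mu + ((p - 2) / (p - q)) * ls = (2 - p) * L"
      unfolding ls_def L_def by (rule ex1p[OF pq(1,2)])
    finally show ?thesis .
  qed
  have e2: "mu * (exp (((p - 4) / (p - q)) * ls) * exp ((2 / (2 - p)) * ln mu)) = exp ((4 - p) * L)"
  proof -
    have "mu * (exp (((p - 4) / (p - q)) * ls) * exp ((2 / (2 - p)) * ln mu)) = exp (ln mu + ((p - 4) / (p - q)) * ls + (2 / (2 - p)) * ln mu)"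
      by (subst mu) (simp add: exp_add)
    also have "ln mu + ((p - 4) / (p - q)) * ls + (2 / (2 - p)) * ln mu = (4 - p) * L"
      unfolding ls_def L_def by (rule ex2p[OF pq(1,2)])
    finally show ?thesis .
  qed
  define X where "X = a * exp ((2 - p) * L) + b * exp ((4 - p) * L) * D"
  have lhs: "a * (\<alpha> * mu powr ((q - 2) / (p - 2)) / lam) powr ((p - 2) / (p - q)) +
     b * (\<alpha> * mu powr ((q - 2) / (p - 2)) / lam) powr ((p - 4) / (p - q)) * mu powr (2 / (2 - p)) * D
     = X / mu"
  proof -
    have "mu * (a * (\<alpha> * mu powr ((q - 2) / (p - 2)) / lam) powr ((p - 2) / (p - q)) +
     b * (\<alpha> * mu powr ((q - 2) / (p - 2)) / lam) powr ((p - 4) / (p - q)) * mu powr (2 / (2 - p)) * D)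
     = a * (mu * exp (((p - 2) / (p - q)) * ls)) + b * (mu * (exp (((p - 4) / (p - q)) * ls) * exp ((2 / (2 - p)) * ln mu))) * D"
      unfolding sp by (simp add: mp algebra_simps)
    also have "\<dots> = X" unfolding e1 e2 X_def ..
    finally show ?thesis using assms by (simp add: field_simps)
  qed
  have rhs: "(a + b * (t^2 * D)) * t = exp ((p - 1) * L) * X"
  proof -
    have "exp ((p - 1) * L) * X = a * (exp ((p - 1) * L) * exp ((2 - p) * L)) + b * (exp ((p - 1) * L) * exp ((4 - p) * L)) * D"
      unfolding X_def by (simp add: algebra_simps)
    also have "\<dots> = a * exp L + b * (exp (2 * L) * exp L) * D"
      unfolding exp_mult_eq by (simp add: algebra_simps)
    also have "\<dots> = (a + b * (t^2 * D)) * t" unfolding t2 by (simp add: tL algebra_simps)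
    finally show ?thesis by simp
  qed
  have "(X / mu = 1) \<longleftrightarrow> (exp ((p - 1) * L) * X = mu * exp ((p - 1) * L))"
    using assms by (auto simp: field_simps)
  thus ?thesis unfolding lhs rhs tp by simp
qed

definition bet :: "real poly \<Rightarrow> real \<Rightarrow> real" where
  "bet P s = (if s > 0 then poly P (1 / s) * exp (- (1 / s)) else 0)"

definition Qop :: "real poly \<Rightarrow> real poly" where
  "Qop P = [:0, 0, 1:] * (P - pderiv P)"

lemma poly_exp_lim: "((\<lambda>y. poly (R::real poly) y * exp (- y)) \<longlongrightarrow> 0) at_top"
proof -
  have "((\<lambda>y. \<Sum>i\<le>degree R. coeff R i * (y ^ i / exp y)) \<longlongrightarrow> 0) at_top"
    by (intro tendsto_null_sum tendsto_mult_right_zero tendsto_power_div_exp_0)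
  moreover have "(\<lambda>y. \<Sum>i\<le>degree R. coeff R i * (y ^ i / exp y)) = (\<lambda>y. poly R y * exp (- y))"
  proof (rule ext)
    fix y :: real
    have "(\<Sum>i\<le>degree R. coeff R i * (y ^ i / exp y)) = (\<Sum>i\<le>degree R. coeff R i * y ^ i) / exp y"
      by (simp add: sum_divide_distrib)
    also have "\<dots> = poly R y * exp (- y)" by (simp add: poly_altdef exp_minus divide_inverse)
    finally show "(\<Sum>i\<le>degree R. coeff R i * (y ^ i / exp y)) = poly R y * exp (- y)" .
  qed
  ultimately show ?thesis by simp
qed

lemma ev_right_pos: "eventually (\<lambda>h. h > (0::real)) (at_right 0)"
  unfolding eventually_at_right_field by (intro exI[of _ 1]) auto

lemma ev_left_neg: "eventually (\<lambda>h. h < (0::real)) (at_left 0)"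
  unfolding eventually_at_left_field by (intro exI[of _ "-1"]) auto

lemma bet_right: "((\<lambda>h. bet P h / h) \<longlongrightarrow> 0) (at_right 0)"
proof -
  have "((\<lambda>h. poly ([:0, 1:] * P) (inverse h) * exp (- inverse h)) \<longlongrightarrow> 0) (at_right 0)"
    using filterlim_compose[OF poly_exp_lim[of "[:0, 1:] * P"] filterlim_inverse_at_top_right] by (simp add: o_def)
  moreover have "eventually (\<lambda>h. poly ([:0, 1:] * P) (inverse h) * exp (- inverse h) = bet P h / h) (at_right 0)"
    using ev_right_pos by eventually_elim (simp add: bet_def field_simps)
  ultimately show ?thesis by (rule Lim_transform_eventually)
qed

lemma bet_deriv0: "(bet P has_real_derivative 0) (at 0)"
proof -
  have l: "((\<lambda>h. bet P h / h) \<longlongrightarrow> 0) (at_left 0)"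
  proof -
    have "eventually (\<lambda>h. 0 = bet P h / h) (at_left 0)"
      using ev_left_neg by eventually_elim (simp add: bet_def)
    thus ?thesis by (rule Lim_transform_eventually[OF tendsto_const])
  qed
  have "((\<lambda>h. bet P h / h) \<longlongrightarrow> 0) (at 0)"
    unfolding filterlim_at_split using l bet_right by auto
  thus ?thesis unfolding DERIV_def by (simp add: bet_def)
qed

lemma bet_deriv: "(bet P has_real_derivative bet (Qop P) s) (at s)"
proof (cases "s > 0")
  case True
  define g where "g y = poly P (1 / y) * exp (- (1 / y))" for y
  have "(g has_real_derivative
      (poly (pderiv P) (1 / s) * (- 1 / s^2)) * exp (- (1 / s)) + poly P (1 / s) * (exp (- (1 / s)) * (1 / s^2))) (at s)"
    unfolding g_def using True
    by (auto intro!: derivative_eq_intros simp: field_simps power2_eq_square)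
  moreover have "(poly (pderiv P) (1 / s) * (- 1 / s^2)) * exp (- (1 / s)) + poly P (1 / s) * (exp (- (1 / s)) * (1 / s^2)) = bet (Qop P) s"
    using True by (simp add: bet_def Qop_def field_simps power2_eq_square)
  ultimately have d: "(g has_real_derivative bet (Qop P) s) (at s)" by simp
  show ?thesis
    by (rule has_field_derivative_transform_within_open[OF d, of "{0<..}"]) (use True in \<open>auto simp: bet_def g_def\<close>)
next
  case False
  show ?thesis
  proof (cases "s = 0")
    case True
    thus ?thesis using bet_deriv0[of P] by (simp add: bet_def)
  next
    case False
    with \<open>\<not> s > 0\<close> have sn: "s < 0" by simp
    have d: "((\<lambda>y. 0) has_real_derivative bet (Qop P) s) (at s)" using sn by (simp add: bet_def)
    show ?thesis
      by (rule has_field_derivative_transform_within_open[OF d, of "{..<0}"]) (use sn in \<open>auto simp: bet_def\<close>)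
  qed
qed

lemma rho_deriv:
  fixes x0 :: "real^'n"
  shows "((\<lambda>y. r^2 - (y - x0) \<bullet> (y - x0)) has_derivative (\<lambda>h. - (2 * ((x - x0) \<bullet> h)))) (at x)"
  by (auto intro!: derivative_eq_intros simp: inner_commute algebra_simps)

lemma bet_rho_deriv:
  fixes x0 :: "real^'n"
  shows "((\<lambda>y. bet P (r^2 - (y - x0) \<bullet> (y - x0))) has_derivative
     (\<lambda>h. bet (Qop P) (r^2 - (x - x0) \<bullet> (x - x0)) * (- (2 * ((x - x0) \<bullet> h))))) (at x)"
proof -
  have b: "(bet P has_derivative (\<lambda>t. bet (Qop P) (r^2 - (x - x0) \<bullet> (x - x0)) * t)) (at (r^2 - (x - x0) \<bullet> (x - x0)))"
    using bet_deriv[of P "r^2 - (x - x0) \<bullet> (x - x0)"] unfolding has_field_derivative_def .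
  show ?thesis using has_derivative_compose[OF rho_deriv b] by simp
qed

inductive SF :: "real^'n \<Rightarrow> real \<Rightarrow> (real^'n \<Rightarrow> real) \<Rightarrow> bool" for x0 r where
  SF_const: "SF x0 r (\<lambda>x. c)"
| SF_coord: "SF x0 r (\<lambda>x. x $ j)"
| SF_bet: "SF x0 r (\<lambda>x. bet P (r^2 - (x - x0) \<bullet> (x - x0)))"
| SF_add: "SF x0 r f \<Longrightarrow> SF x0 r g \<Longrightarrow> SF x0 r (\<lambda>x. f x + g x)"
| SF_mult: "SF x0 r f \<Longrightarrow> SF x0 r g \<Longrightarrow> SF x0 r (\<lambda>x. f x * g x)"

lemma SF_step: fixes x0 :: "real^'n" shows "SF x0 r f \<Longrightarrow> (\<forall>x. f differentiable (at x)) \<and> (\<forall>i. SF x0 r (pdiff f i))"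
proof (induction rule: SF.induct)
  case (SF_const c)
  have "pdiff (\<lambda>x::real^'n. c) i = (\<lambda>x. 0)" for i
    by (rule ext) (rule pdiff_eqI[of _ "\<lambda>h. 0", simplified], simp)
  thus ?case by (simp add: SF.SF_const)
next
  case (SF_coord j)
  have d: "((\<lambda>x::real^'n. x $ j) has_derivative (\<lambda>h. h $ j)) (at x)" for x
    by (rule bounded_linear_imp_has_derivative) (rule bounded_linear_vec_nth)
  have "pdiff (\<lambda>x. x $ j) i = (\<lambda>x. axis i 1 $ j)" for i
    by (rule ext) (rule pdiff_eqI[OF d])
  hence "SF x0 r (pdiff (\<lambda>x. x $ j) i)" for i by (simp add: SF.SF_const)
  moreover have "(\<lambda>x::real^'n. x $ j) differentiable (at x)" for x using d by (rule differentiableI)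
  ultimately show ?case by auto
next
  case (SF_bet P)
  have pd: "pdiff (\<lambda>x. bet P (r^2 - (x - x0) \<bullet> (x - x0))) i =
    (\<lambda>x. bet (Qop P) (r^2 - (x - x0) \<bullet> (x - x0)) * ((\<lambda>x. (-2) * x $ i) x + (\<lambda>x. 2 * x0 $ i) x))" for i
  proof (rule ext)
    fix x
    show "pdiff (\<lambda>x. bet P (r^2 - (x - x0) \<bullet> (x - x0))) i x = bet (Qop P) (r^2 - (x - x0) \<bullet> (x - x0)) * ((\<lambda>x. (-2) * x $ i) x + (\<lambda>x. 2 * x0 $ i) x)"
    proof -
      have hd: "((\<lambda>y. bet P (r^2 - (y - x0) \<bullet> (y - x0))) has_derivative
         (\<lambda>h. bet (Qop P) (r^2 - (x - x0) \<bullet> (x - x0)) * (- (2 * ((x - x0) \<bullet> h))))) (at x)"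
        by (rule bet_rho_deriv)
      show ?thesis using pdiff_eqI[OF hd, of i] by (simp add: inner_axis algebra_simps)
    qed
  qed
  have "SF x0 r (pdiff (\<lambda>x. bet P (r^2 - (x - x0) \<bullet> (x - x0))) i)" for i
    unfolding pd by (intro SF.SF_mult SF.SF_bet SF.SF_add SF.SF_const SF.SF_coord)
  moreover have "(\<lambda>x. bet P (r^2 - (x - x0) \<bullet> (x - x0))) differentiable (at x)" for x
    using bet_rho_deriv by (rule differentiableI)
  ultimately show ?case by auto
next
  case (SF_add f g)
  have "pdiff (\<lambda>x. f x + g x) i = (\<lambda>x. pdiff f i x + pdiff g i x)" for i
    using pdiff_lin[of f _ g 1 i] SF_add.IH by (auto simp: fun_eq_iff)
  with SF_add.IH show ?case by (auto intro!: SF.SF_add derivative_intros)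
next
  case (SF_mult f g)
  have "pdiff (\<lambda>x. f x * g x) i = (\<lambda>x. pdiff f i x * g x + f x * pdiff g i x)" for i
    using pdiff_mult[of f _ g i] SF_mult.IH by (auto simp: fun_eq_iff)
  with SF_mult.IH SF_mult.hyps show ?case by (auto intro!: SF.SF_add SF.SF_mult derivative_intros)
qed

lemma SF_Cinf: "SF x0 r f \<Longrightarrow> Cinf f"
proof (rule Cinf.coinduct[of "SF x0 r"])
  fix h assume "SF x0 r h"
  thus "\<exists>f. h = f \<and> (\<forall>x. f differentiable at x) \<and> (\<forall>i. SF x0 r (pdiff f i) \<or> Cinf (pdiff f i))"
    using SF_step by blast
qed

lemma bump:
  fixes \<Omega> :: "(real^'n) set"
  assumes "open \<Omega>" "x0 \<in> \<Omega>"
  shows "\<exists>\<phi> r. test_fun \<Omega> \<phi> \<and> r > 0 \<and> ball x0 r \<subseteq> \<Omega> \<and> (\<forall>x. \<phi> x \<ge> 0) \<and> (\<forall>x\<in>ball x0 r. \<phi> x > 0)"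
proof -
  obtain e where e: "e > 0" "ball x0 e \<subseteq> \<Omega>" using assms open_contains_ball by blast
  define r where "r = e / 2"
  have r: "r > 0" unfolding r_def using e by simp
  define \<phi> where "\<phi> x = bet [:1:] (r^2 - (x - x0) \<bullet> (x - x0))" for x
  have ne: "(x - x0) \<bullet> (x - x0) < r^2 \<longleftrightarrow> x \<in> ball x0 r" for x
  proof -
    have "(x - x0) \<bullet> (x - x0) = (norm (x - x0))^2" by (simp add: power2_norm_eq_inner)
    moreover have "(norm (x - x0))^2 < r^2 \<longleftrightarrow> norm (x - x0) < r"
    proof -
      have "r^2 \<le> (norm (x - x0))^2 \<longleftrightarrow> r \<le> norm (x - x0)"
        by (rule power_mono_iff) (use r in auto)
      thus ?thesis by (simp add: not_le[symmetric])
    qed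
    ultimately show ?thesis by (simp add: dist_norm norm_minus_commute)
  qed
  have pos: "\<phi> x > 0 \<longleftrightarrow> x \<in> ball x0 r" for x
    unfolding \<phi>_def bet_def using ne[of x] by auto
  have nn: "\<phi> x \<ge> 0" for x unfolding \<phi>_def bet_def by simp
  have supp: "{x. \<phi> x \<noteq> 0} = ball x0 r"
  proof
    show "{x. \<phi> x \<noteq> 0} \<subseteq> ball x0 r"
    proof
      fix x assume "x \<in> {x. \<phi> x \<noteq> 0}"
      hence "\<phi> x > 0" using nn[of x] by simp
      thus "x \<in> ball x0 r" using pos by simp
    qed
    show "ball x0 r \<subseteq> {x. \<phi> x \<noteq> 0}"
    proof
      fix x assume "x \<in> ball x0 r"
      hence "\<phi> x > 0" using pos by simp
      thus "x \<in> {x. \<phi> x \<noteq> 0}" by simp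
    qed
  qed
  have cl: "closure {x. \<phi> x \<noteq> 0} = cball x0 r" unfolding supp using r by (simp add: closure_ball)
  have sub: "cball x0 r \<subseteq> \<Omega>"
  proof (rule order_trans[OF _ e(2)])
    show "cball x0 r \<subseteq> ball x0 e" unfolding cball_subset_ball_iff using e r_def by simp
  qed
  have ci: "Cinf \<phi>" unfolding \<phi>_def by (rule SF_Cinf[OF SF.SF_bet])
  have "test_fun \<Omega> \<phi>" unfolding test_fun_def cl using ci sub by auto
  moreover have "ball x0 r \<subseteq> \<Omega>" using sub by auto
  ultimately show ?thesis using r nn pos by blast
qed

lemma weak_unfold:
  fixes \<Omega> :: "(real^'n) set"
  assumes "open \<Omega>"
  shows "weak_sol_with Mf lam mu q p \<Omega> u G \<longleftrightarrow> H01 \<Omega> u G \<and> (AE x in restrict_space lborel \<Omega>. u x > 0) \<and>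
     (\<forall>\<phi>. test_fun \<Omega> \<phi> \<longrightarrow>
        integrable (restrict_space lborel \<Omega>) (\<lambda>x. G x \<bullet> grad \<phi> x) \<and>
        integrable (restrict_space lborel \<Omega>) (\<lambda>x. (lam * u x powr (q - 1) + mu * u x powr (p - 1)) * \<phi> x) \<and>
        Mf (integral\<^sup>L (restrict_space lborel \<Omega>) (\<lambda>x. (norm (G x))^2)) * integral\<^sup>L (restrict_space lborel \<Omega>) (\<lambda>x. G x \<bullet> grad \<phi> x) =
          integral\<^sup>L (restrict_space lborel \<Omega>) (\<lambda>x. (lam * u x powr (q - 1) + mu * u x powr (p - 1)) * \<phi> x))"
  unfolding weak_sol_with_def dirichlet_def set_conv[OF assms] ..

lemma D_pos:
  fixes \<Omega> :: "(real^'n) set"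
  assumes "open \<Omega>" "\<Omega> \<noteq> {}" "sol_P \<alpha> q p \<Omega> u G" "\<alpha> > 0"
  shows "integral\<^sup>L (restrict_space lborel \<Omega>) (\<lambda>x. (norm (G x))^2) > 0"
proof (rule ccontr)
  let ?M = "restrict_space lborel \<Omega>"
  let ?w = "\<lambda>x. \<alpha> * u x powr (q - 1) + 1 * u x powr (p - 1)"
  assume "\<not> ?thesis"
  moreover have "integral\<^sup>L ?M (\<lambda>x. (norm (G x))^2) \<ge> 0" by simp
  ultimately have D0: "integral\<^sup>L ?M (\<lambda>x. (norm (G x))^2) = 0" by linarith
  note S = assms(3)[unfolded sol_P_def weak_unfold[OF assms(1)]]
  note H = H01_unfold[OF assms(1) conjunct1[OF S]]
  have upos: "AE x in ?M. u x > 0" using S by blast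
  obtain x0 where x0: "x0 \<in> \<Omega>" using assms(2) by blast
  obtain \<phi> r where b: "test_fun \<Omega> \<phi>" "r > 0" "ball x0 r \<subseteq> \<Omega>" "\<And>x. \<phi> x \<ge> 0" "\<And>x. x \<in> ball x0 r \<Longrightarrow> \<phi> x > 0"
    using bump[OF assms(1) x0] by blast
  note tf = test_facts[OF b(1)]
  have eq: "1 * integral\<^sup>L ?M (\<lambda>x. G x \<bullet> grad \<phi> x) = integral\<^sup>L ?M (\<lambda>x. ?w x * \<phi> x)"
    and iw: "integrable ?M (\<lambda>x. ?w x * \<phi> x)"
    using S b(1) by auto
  have [measurable]: "G \<in> borel_measurable ?M" using H(2) .
  have [measurable]: "grad \<phi> \<in> borel_measurable ?M" by (rule cont_borel_M[OF Cinf_grad_cont[OF tf(1)]])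
  have igp: "integrable ?M (\<lambda>x. (norm (grad \<phi> x))^2)"
    by (rule cs_M(1)[OF assms(1) tf(2,3) continuous_on_power[OF continuous_on_norm[OF Cinf_grad_cont[OF tf(1)]]]])
       (simp add: grad_zero)
  have "\<bar>integral\<^sup>L ?M (\<lambda>x. G x \<bullet> grad \<phi> x)\<bar> \<le> sqrt (integral\<^sup>L ?M (\<lambda>x. (norm (G x))^2)) * sqrt (integral\<^sup>L ?M (\<lambda>x. (norm (grad \<phi> x))^2))"
    by (rule L2_inner(2)[OF _ _ H(4) igp]) measurable
  hence "integral\<^sup>L ?M (\<lambda>x. ?w x * \<phi> x) = 0" using eq D0 by simp
  moreover have "AE x in ?M. 0 \<le> ?w x * \<phi> x"
    using upos by eventually_elim (intro mult_nonneg_nonneg add_nonneg_nonneg b(4), use assms(4) in auto)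
  ultimately have "AE x in ?M. ?w x * \<phi> x = 0"
    using integral_nonneg_eq_0_iff_AE[OF iw] by simp
  hence "AE x in ?M. x \<notin> ball x0 r"
    using upos
  proof eventually_elim
    case (elim x)
    have "?w x > 0" using elim(2) assms(4) by (simp add: add_pos_pos)
    with elim(1) have "\<phi> x = 0" by simp
    thus "x \<notin> ball x0 r" using b(5)[of x] by auto
  qed
  hence "AE x in lborel. x \<in> \<Omega> \<longrightarrow> x \<notin> ball x0 r" unfolding set_conv(4)[OF assms(1)] .
  hence "AE x in lborel. x \<notin> ball x0 r"
  proof eventually_elim
    case (elim x) thus ?case using b(3) by blast
  qed
  hence "ball x0 r \<in> null_sets lborel" by (subst AE_iff_null_sets) auto
  hence "emeasure lborel (ball x0 r) = 0" by auto
  moreover have "emeasure lborel (ball x0 r) > 0"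
    using b(2) by (simp add: emeasure_ball unit_ball_vol_pos)
  ultimately show False by simp
qed

lemma test_fun_cmult:
  assumes "test_fun \<Omega> \<psi>"
  shows "test_fun \<Omega> (\<lambda>x. c * \<psi> x)"
proof (cases "c = 0")
  case True
  have eq: "{x. c * \<psi> x \<noteq> 0} = {}" using True by simp
  have "Cinf (\<lambda>x. c * \<psi> x)" by (rule Cinf_cmult[OF test_facts(1)[OF assms]])
  thus ?thesis unfolding test_fun_def eq by simp
next
  case False
  have eq: "{x. c * \<psi> x \<noteq> 0} = {x. \<psi> x \<noteq> 0}" using False by simp
  have "Cinf (\<lambda>x. c * \<psi> x)" by (rule Cinf_cmult[OF test_facts(1)[OF assms]])
  thus ?thesis using assms unfolding test_fun_def eq by simp
qed

lemma grad_cmult: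
  assumes "Cinf \<psi>"
  shows "grad (\<lambda>x. c * \<psi> x) x = c *\<^sub>R grad \<psi> x"
  unfolding grad_def using pdiff_cmult[OF Cinf_differentiable[OF assms]]
  by (simp add: vec_eq_iff)

lemma H01_scale:
  fixes \<Omega> :: "(real^'n) set"
  assumes "open \<Omega>" "H01 \<Omega> u G"
  shows "H01 \<Omega> (\<lambda>x. c * u x) (\<lambda>x. c *\<^sub>R G x)"
proof -
  let ?M = "restrict_space lborel \<Omega>"
  note H = H01_unfold[OF assms]
  obtain \<psi> where tk: "\<And>k. test_fun \<Omega> (\<psi> k)"
    and l1: "(\<lambda>k. integral\<^sup>L ?M (\<lambda>x. (\<psi> k x - u x)^2)) \<longlonglongrightarrow> 0"
    and l2: "(\<lambda>k. integral\<^sup>L ?M (\<lambda>x. (norm (grad (\<psi> k) x - G x))^2)) \<longlonglongrightarrow> 0"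
    using H(5) by blast
  have ck: "Cinf (\<psi> k)" for k using test_facts(1)[OF tk] .
  have [measurable]: "u \<in> borel_measurable ?M" "G \<in> borel_measurable ?M" using H(1,2) by auto
  have m1: "(\<lambda>x. c * u x) \<in> borel_measurable ?M" by measurable
  have m2: "(\<lambda>x. c *\<^sub>R G x) \<in> borel_measurable ?M" by measurable
  have i1: "integrable ?M (\<lambda>x. (c * u x)^2)"
    using integrable_mult_right[OF H(3), of "c^2"] by (simp add: power_mult_distrib)
  have i2: "integrable ?M (\<lambda>x. (norm (c *\<^sub>R G x))^2)"
    using integrable_mult_right[OF H(4), of "c^2"] by (simp add: power_mult_distrib)
  have e1: "integral\<^sup>L ?M (\<lambda>x. (c * \<psi> k x - c * u x)^2) = c^2 * integral\<^sup>L ?M (\<lambda>x. (\<psi> k x - u x)^2)" for k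
  proof -
    have "(\<lambda>x. (c * \<psi> k x - c * u x)^2) = (\<lambda>x. c^2 * (\<psi> k x - u x)^2)"
      by (simp add: power_mult_distrib right_diff_distrib[symmetric])
    thus ?thesis by simp
  qed
  have e2: "integral\<^sup>L ?M (\<lambda>x. (norm (grad (\<lambda>y. c * \<psi> k y) x - c *\<^sub>R G x))^2) = c^2 * integral\<^sup>L ?M (\<lambda>x. (norm (grad (\<psi> k) x - G x))^2)" for k
  proof -
    have "(\<lambda>x. (norm (grad (\<lambda>y. c * \<psi> k y) x - c *\<^sub>R G x))^2) = (\<lambda>x. c^2 * (norm (grad (\<psi> k) x - G x))^2)"
      by (simp add: grad_cmult[OF ck] scaleR_diff_right[symmetric] power_mult_distrib)
    thus ?thesis by simp
  qed
  have L1: "(\<lambda>k. integral\<^sup>L ?M (\<lambda>x. (c * \<psi> k x - c * u x)^2)) \<longlonglongrightarrow> 0"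
    unfolding e1 using tendsto_mult_right_zero[OF l1, of "c^2"] by simp
  have L2: "(\<lambda>k. integral\<^sup>L ?M (\<lambda>x. (norm (grad (\<lambda>y. c * \<psi> k y) x - c *\<^sub>R G x))^2)) \<longlonglongrightarrow> 0"
    unfolding e2 using tendsto_mult_right_zero[OF l2, of "c^2"] by simp
  have "\<exists>\<psi>'. (\<forall>k. test_fun \<Omega> (\<psi>' k)) \<and>
        (\<lambda>k. integral\<^sup>L ?M (\<lambda>x. (\<psi>' k x - c * u x)^2)) \<longlonglongrightarrow> 0 \<and>
        (\<lambda>k. integral\<^sup>L ?M (\<lambda>x. (norm (grad (\<psi>' k) x - c *\<^sub>R G x))^2)) \<longlonglongrightarrow> 0"
    by (rule exI[of _ "\<lambda>k x. c * \<psi> k x"]) (use test_fun_cmult[OF tk] L1 L2 in auto)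
  thus ?thesis unfolding H01_def set_conv[OF assms(1)] using m1 m2 i1 i2 by auto
qed

lemma powr_ident:
  fixes lam mu \<alpha> p q t :: real
  assumes "q < p" "lam > 0" "mu > 0" "\<alpha> > 0" "t = (lam / (\<alpha> * mu)) powr (1 / (p - q))"
  shows "lam * t powr (q - 1) = mu * t powr (p - 1) * \<alpha>"
proof -
  have tp: "t > 0" using assms by simp
  have "t powr (p - q) = (lam / (\<alpha> * mu)) powr ((1 / (p - q)) * (p - q))"
    unfolding assms(5) by (simp add: powr_powr)
  also have "\<dots> = lam / (\<alpha> * mu)" using assms by simp
  finally have a: "t powr (p - q) = lam / (\<alpha> * mu)" .
  have "t powr (p - 1) = t powr (q - 1) * t powr (p - q)"
    by (simp add: powr_add[symmetric])
  hence "mu * t powr (p - 1) * \<alpha> = t powr (q - 1) * lam" using a assms by (simp add: field_simps)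
  thus ?thesis by simp
qed

lemma rhs_transfer:
  fixes M :: "'a measure" and u \<phi> :: "'a \<Rightarrow> real"
  assumes upos: "AE x in M. u x > 0" and [measurable]: "u \<in> borel_measurable M" "\<phi> \<in> borel_measurable M"
    and t: "t > 0" and K: "K = mu * t powr (p - 1)" and id: "lam * t powr (q - 1) = mu * t powr (p - 1) * \<alpha>"
    and mu: "mu > 0"
  shows "integrable M (\<lambda>x. (lam * (t * u x) powr (q - 1) + mu * (t * u x) powr (p - 1)) * \<phi> x)
     \<longleftrightarrow> integrable M (\<lambda>x. (\<alpha> * u x powr (q - 1) + 1 * u x powr (p - 1)) * \<phi> x)"
    and "integral\<^sup>L M (\<lambda>x. (lam * (t * u x) powr (q - 1) + mu * (t * u x) powr (p - 1)) * \<phi> x)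
     = K * integral\<^sup>L M (\<lambda>x. (\<alpha> * u x powr (q - 1) + 1 * u x powr (p - 1)) * \<phi> x)"
proof -
  have Kp: "K \<noteq> 0" using K t mu by simp
  have ae: "AE x in M. (lam * (t * u x) powr (q - 1) + mu * (t * u x) powr (p - 1)) * \<phi> x
      = K * ((\<alpha> * u x powr (q - 1) + 1 * u x powr (p - 1)) * \<phi> x)"
    using upos
  proof eventually_elim
    case (elim x)
    have "lam * (t * u x) powr (q - 1) + mu * (t * u x) powr (p - 1)
       = (lam * t powr (q - 1)) * u x powr (q - 1) + mu * t powr (p - 1) * u x powr (p - 1)"
      using t elim by (simp add: powr_mult)
    also have "\<dots> = K * (\<alpha> * u x powr (q - 1) + 1 * u x powr (p - 1))"
      unfolding id K by (simp add: algebra_simps)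
    finally show ?case by simp
  qed
  have m1: "(\<lambda>x. (lam * (t * u x) powr (q - 1) + mu * (t * u x) powr (p - 1)) * \<phi> x) \<in> borel_measurable M"
    by measurable
  have m2: "(\<lambda>x. K * ((\<alpha> * u x powr (q - 1) + 1 * u x powr (p - 1)) * \<phi> x)) \<in> borel_measurable M"
    by measurable
  have "integrable M (\<lambda>x. (lam * (t * u x) powr (q - 1) + mu * (t * u x) powr (p - 1)) * \<phi> x)
     \<longleftrightarrow> integrable M (\<lambda>x. K * ((\<alpha> * u x powr (q - 1) + 1 * u x powr (p - 1)) * \<phi> x))"
    by (rule integrable_cong_AE[OF m1 m2 ae])
  also have "\<dots> \<longleftrightarrow> integrable M (\<lambda>x. (\<alpha> * u x powr (q - 1) + 1 * u x powr (p - 1)) * \<phi> x)"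
    using Kp by simp
  finally show "integrable M (\<lambda>x. (lam * (t * u x) powr (q - 1) + mu * (t * u x) powr (p - 1)) * \<phi> x)
     \<longleftrightarrow> integrable M (\<lambda>x. (\<alpha> * u x powr (q - 1) + 1 * u x powr (p - 1)) * \<phi> x)" .
  have "integral\<^sup>L M (\<lambda>x. (lam * (t * u x) powr (q - 1) + mu * (t * u x) powr (p - 1)) * \<phi> x)
     = integral\<^sup>L M (\<lambda>x. K * ((\<alpha> * u x powr (q - 1) + 1 * u x powr (p - 1)) * \<phi> x))"
    by (rule integral_cong_AE[OF m1 m2 ae])
  thus "integral\<^sup>L M (\<lambda>x. (lam * (t * u x) powr (q - 1) + mu * (t * u x) powr (p - 1)) * \<phi> x)
     = K * integral\<^sup>L M (\<lambda>x. (\<alpha> * u x powr (q - 1) + 1 * u x powr (p - 1)) * \<phi> x)" by simp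
qed

theorem proposition1p1:
  fixes \<Omega> :: "(real^'n) set" and u :: "real^'n \<Rightarrow> real" and G :: "real^'n \<Rightarrow> real^'n"
    and q p a b lam \<mu> \<alpha> :: real
  assumes "CARD('n) \<ge> 3"
    and "smooth_bounded_domain \<Omega>"
    and "2 \<le> q" and "q < p" and "p \<le> 2 * real CARD('n) / (real CARD('n) - 2)"
    and "a > 0" and "b > 0" and "lam > 0" and "\<mu> > 0" and "\<alpha> > 0"
    and "sol_P \<alpha> q p \<Omega> u G"
  shows "sol_Kirchhoff a b lam \<mu> q p \<Omega> (\<lambda>x. (lam / (\<alpha> * \<mu>)) powr (1 / (p - q)) * u x)
     \<longleftrightarrow> f_abl a b lam \<mu> q p \<Omega> G \<alpha> = 1"
proof -
  let ?M = "restrict_space lborel \<Omega>"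
  have Oo: "open \<Omega>" and One: "\<Omega> \<noteq> {}" using assms(2) unfolding smooth_bounded_domain_def by auto
  define t where "t = (lam / (\<alpha> * \<mu>)) powr (1 / (p - q))"
  have t0: "t > 0" unfolding t_def using assms by simp
  define K where "K = \<mu> * t powr (p - 1)"
  define D where "D = integral\<^sup>L ?M (\<lambda>x. (norm (G x))^2)"
  have Deq: "dirichlet \<Omega> G = D" unfolding dirichlet_def D_def set_conv(3)[OF Oo] ..
  have alg: "f_abl a b lam \<mu> q p \<Omega> G \<alpha> = 1 \<longleftrightarrow> (a + b * (t^2 * D)) * t = K"
    unfolding f_abl_def Deq K_def t_def by (rule ALG) (use assms in auto)
  have id: "lam * t powr (q - 1) = \<mu> * t powr (p - 1) * \<alpha>"
    by (rule powr_ident) (use assms t_def in auto)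
  note S = assms(11)[unfolded sol_P_def weak_unfold[OF Oo]]
  have HU: "H01 \<Omega> u G" using S by blast
  note H = H01_unfold[OF Oo HU]
  have upos: "AE x in ?M. u x > 0" using S by blast
  have Sphi: "\<And>\<phi>. test_fun \<Omega> \<phi> \<Longrightarrow> integrable ?M (\<lambda>x. G x \<bullet> grad \<phi> x) \<and>
        integrable ?M (\<lambda>x. (\<alpha> * u x powr (q - 1) + 1 * u x powr (p - 1)) * \<phi> x) \<and>
        integral\<^sup>L ?M (\<lambda>x. G x \<bullet> grad \<phi> x) = integral\<^sup>L ?M (\<lambda>x. (\<alpha> * u x powr (q - 1) + 1 * u x powr (p - 1)) * \<phi> x)"
    using S by simp
  have Dpos: "D > 0" unfolding D_def by (rule D_pos[OF Oo One assms(11) assms(10)])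
  have [measurable]: "u \<in> borel_measurable ?M" "G \<in> borel_measurable ?M" using H(1,2) by auto
  have phim: "\<phi> \<in> borel_measurable ?M" if "test_fun \<Omega> \<phi>" for \<phi>
    by (rule cont_borel_M[OF Cinf_cont[OF test_facts(1)[OF that]]])
  have gphim: "grad \<phi> \<in> borel_measurable ?M" if "test_fun \<Omega> \<phi>" for \<phi>
    by (rule cont_borel_M[OF Cinf_grad_cont[OF test_facts(1)[OF that]]])
  have RT: "integrable ?M (\<lambda>x. (lam * (t * u x) powr (q - 1) + \<mu> * (t * u x) powr (p - 1)) * \<phi> x)
       \<longleftrightarrow> integrable ?M (\<lambda>x. (\<alpha> * u x powr (q - 1) + 1 * u x powr (p - 1)) * \<phi> x)"
     "integral\<^sup>L ?M (\<lambda>x. (lam * (t * u x) powr (q - 1) + \<mu> * (t * u x) powr (p - 1)) * \<phi> x)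
       = K * integral\<^sup>L ?M (\<lambda>x. (\<alpha> * u x powr (q - 1) + 1 * u x powr (p - 1)) * \<phi> x)"
    if "test_fun \<Omega> \<phi>" for \<phi>
    using rhs_transfer[OF upos _ phim[OF that] t0 K_def id assms(9)] by auto
  have vpos: "AE x in ?M. t * u x > 0" using upos by eventually_elim (use t0 in simp)
  have tfold: "(lam / (\<alpha> * \<mu>)) powr (1 / (p - q)) = t" unfolding t_def ..
  show ?thesis
    unfolding tfold alg sol_Kirchhoff_def weak_unfold[OF Oo]
  proof
    assume "\<exists>G'. H01 \<Omega> (\<lambda>x. t * u x) G' \<and> (AE x in ?M. 0 < t * u x) \<and>
      (\<forall>\<phi>. test_fun \<Omega> \<phi> \<longrightarrow> integrable ?M (\<lambda>x. G' x \<bullet> grad \<phi> x) \<and>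
        integrable ?M (\<lambda>x. (lam * (t * u x) powr (q - 1) + \<mu> * (t * u x) powr (p - 1)) * \<phi> x) \<and>
        (a + b * integral\<^sup>L ?M (\<lambda>x. (norm (G' x))\<^sup>2)) * integral\<^sup>L ?M (\<lambda>x. G' x \<bullet> grad \<phi> x) =
        integral\<^sup>L ?M (\<lambda>x. (lam * (t * u x) powr (q - 1) + \<mu> * (t * u x) powr (p - 1)) * \<phi> x))"
    then obtain G' where HV: "H01 \<Omega> (\<lambda>x. t * u x) G'"
      and KS: "\<And>\<phi>. test_fun \<Omega> \<phi> \<Longrightarrow> integrable ?M (\<lambda>x. G' x \<bullet> grad \<phi> x) \<and>
        (a + b * integral\<^sup>L ?M (\<lambda>x. (norm (G' x))\<^sup>2)) * integral\<^sup>L ?M (\<lambda>x. G' x \<bullet> grad \<phi> x) =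
        integral\<^sup>L ?M (\<lambda>x. (lam * (t * u x) powr (q - 1) + \<mu> * (t * u x) powr (p - 1)) * \<phi> x)"
      by blast
    note H' = H01_unfold[OF Oo HV]
    have [measurable]: "G' \<in> borel_measurable ?M" using H'(2) .
    define D' where "D' = integral\<^sup>L ?M (\<lambda>x. (norm (G' x))\<^sup>2)"
    have gg: "integral\<^sup>L ?M (\<lambda>x. G' x \<bullet> grad \<phi> x) = t * integral\<^sup>L ?M (\<lambda>x. G x \<bullet> grad \<phi> x)"
      if tf: "test_fun \<Omega> \<phi>" for \<phi>
    proof -
      have "integral\<^sup>L ?M (\<lambda>x. G' x \<bullet> grad \<phi> x) = - integral\<^sup>L ?M (\<lambda>x. t * u x * lap \<phi> x)"
        by (rule WD[OF Oo HV tf])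
      also have "\<dots> = t * (- integral\<^sup>L ?M (\<lambda>x. u x * lap \<phi> x))"
        by (simp add: mult.assoc)
      also have "- integral\<^sup>L ?M (\<lambda>x. u x * lap \<phi> x) = integral\<^sup>L ?M (\<lambda>x. G x \<bullet> grad \<phi> x)"
        by (rule WD[OF Oo HU tf, symmetric])
      finally show ?thesis .
    qed
    define F where "F x = G' x - t *\<^sub>R G x" for x
    have [measurable]: "F \<in> borel_measurable ?M" unfolding F_def by measurable
    have itG: "integrable ?M (\<lambda>x. (norm (t *\<^sub>R G x))^2)"
      using integrable_mult_right[OF H(4), of "t^2"] by (simp add: power_mult_distrib)
    have iF: "integrable ?M (\<lambda>x. (norm (F x))^2)" unfolding F_def
      by (rule sq_diff_int[OF _ _ H'(4) itG]) measurable
    have orth: "integral\<^sup>L ?M (\<lambda>x. F x \<bullet> grad \<phi> x) = 0" if tf: "test_fun \<Omega> \<phi>" for \<phi>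
    proof -
      have i1: "integrable ?M (\<lambda>x. G' x \<bullet> grad \<phi> x)" using KS[OF tf] by blast
      have i2: "integrable ?M (\<lambda>x. t * (G x \<bullet> grad \<phi> x))" using Sphi[OF tf] by simp
      have "integral\<^sup>L ?M (\<lambda>x. F x \<bullet> grad \<phi> x) = integral\<^sup>L ?M (\<lambda>x. G' x \<bullet> grad \<phi> x - t * (G x \<bullet> grad \<phi> x))"
        unfolding F_def by (simp add: inner_diff_left)
      also have "\<dots> = integral\<^sup>L ?M (\<lambda>x. G' x \<bullet> grad \<phi> x) - t * integral\<^sup>L ?M (\<lambda>x. G x \<bullet> grad \<phi> x)"
        using i1 i2 by simp
      also have "\<dots> = 0" using gg[OF tf] by simp
      finally show ?thesis .
    qed
    have o1: "integral\<^sup>L ?M (\<lambda>x. G x \<bullet> F x) = 0" by (rule K4[OF Oo HU _ iF orth]) measurable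
    have o2: "integral\<^sup>L ?M (\<lambda>x. G' x \<bullet> F x) = 0" by (rule K4[OF Oo HV _ iF orth]) measurable
    have iGF: "integrable ?M (\<lambda>x. G x \<bullet> F x)" by (rule L2_inner(1)[OF _ _ H(4) iF]) measurable
    have iG'F: "integrable ?M (\<lambda>x. G' x \<bullet> F x)" by (rule L2_inner(1)[OF _ _ H'(4) iF]) measurable
    have iGG: "integrable ?M (\<lambda>x. G x \<bullet> G x)" by (rule L2_inner(1)[OF _ _ H(4) H(4)]) measurable
    have iG'G: "integrable ?M (\<lambda>x. G' x \<bullet> G x)" by (rule L2_inner(1)[OF _ _ H'(4) H(4)]) measurable
    have c1: "integral\<^sup>L ?M (\<lambda>x. G' x \<bullet> G x) = t * D"
    proof -
      have "(\<lambda>x. G' x \<bullet> G x) = (\<lambda>x. G x \<bullet> F x + t * (G x \<bullet> G x))"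
        unfolding F_def by (auto simp: inner_diff_right inner_commute)
      hence "integral\<^sup>L ?M (\<lambda>x. G' x \<bullet> G x) = integral\<^sup>L ?M (\<lambda>x. G x \<bullet> F x) + t * integral\<^sup>L ?M (\<lambda>x. G x \<bullet> G x)"
        using iGF iGG by simp
      thus ?thesis unfolding o1 D_def by (simp add: power2_norm_eq_inner)
    qed
    have DD: "D' = t^2 * D"
    proof -
      have "(\<lambda>x. (norm (G' x))^2) = (\<lambda>x. G' x \<bullet> F x + t * (G' x \<bullet> G x))"
        unfolding F_def by (auto simp: power2_norm_eq_inner inner_diff_right)
      hence "D' = integral\<^sup>L ?M (\<lambda>x. G' x \<bullet> F x) + t * integral\<^sup>L ?M (\<lambda>x. G' x \<bullet> G x)"
        unfolding D'_def using iG'F iG'G by simp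
      thus ?thesis unfolding o2 c1 by (simp add: power2_eq_square)
    qed
    obtain \<phi> where tf: "test_fun \<Omega> \<phi>" and nz: "integral\<^sup>L ?M (\<lambda>x. G x \<bullet> grad \<phi> x) \<noteq> 0"
    proof (rule ccontr)
      assume "\<not> thesis"
      with that have all: "\<And>\<phi>. test_fun \<Omega> \<phi> \<Longrightarrow> integral\<^sup>L ?M (\<lambda>x. G x \<bullet> grad \<phi> x) = 0" by blast
      have "integral\<^sup>L ?M (\<lambda>x. G x \<bullet> G x) = 0" by (rule K4[OF Oo HU _ H(4) all]) measurable
      hence "D = 0" unfolding D_def by (simp add: power2_norm_eq_inner)
      with Dpos show False by simp
    qed
    have "(a + b * D') * integral\<^sup>L ?M (\<lambda>x. G' x \<bullet> grad \<phi> x) =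
        integral\<^sup>L ?M (\<lambda>x. (lam * (t * u x) powr (q - 1) + \<mu> * (t * u x) powr (p - 1)) * \<phi> x)"
      using KS[OF tf] unfolding D'_def by blast
    also have "\<dots> = K * integral\<^sup>L ?M (\<lambda>x. G x \<bullet> grad \<phi> x)"
      using RT(2)[OF tf] Sphi[OF tf] by simp
    finally have "((a + b * (t^2 * D)) * t) * integral\<^sup>L ?M (\<lambda>x. G x \<bullet> grad \<phi> x) = K * integral\<^sup>L ?M (\<lambda>x. G x \<bullet> grad \<phi> x)"
      unfolding gg[OF tf] DD by (simp add: algebra_simps)
    thus "(a + b * (t^2 * D)) * t = K" using nz by simp
  next
    assume eq: "(a + b * (t^2 * D)) * t = K"
    let ?G' = "\<lambda>x. t *\<^sub>R G x"
    have HV: "H01 \<Omega> (\<lambda>x. t * u x) ?G'" by (rule H01_scale[OF Oo HU])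
    have D': "integral\<^sup>L ?M (\<lambda>x. (norm (?G' x))\<^sup>2) = t^2 * D"
      unfolding D_def by (simp add: power_mult_distrib)
    have "\<forall>\<phi>. test_fun \<Omega> \<phi> \<longrightarrow> integrable ?M (\<lambda>x. ?G' x \<bullet> grad \<phi> x) \<and>
        integrable ?M (\<lambda>x. (lam * (t * u x) powr (q - 1) + \<mu> * (t * u x) powr (p - 1)) * \<phi> x) \<and>
        (a + b * integral\<^sup>L ?M (\<lambda>x. (norm (?G' x))\<^sup>2)) * integral\<^sup>L ?M (\<lambda>x. ?G' x \<bullet> grad \<phi> x) =
        integral\<^sup>L ?M (\<lambda>x. (lam * (t * u x) powr (q - 1) + \<mu> * (t * u x) powr (p - 1)) * \<phi> x)"
    proof (intro allI impI conjI)
      fix \<phi> assume tf: "test_fun \<Omega> \<phi>"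
      show "integrable ?M (\<lambda>x. ?G' x \<bullet> grad \<phi> x)" using Sphi[OF tf] by simp
      show "integrable ?M (\<lambda>x. (lam * (t * u x) powr (q - 1) + \<mu> * (t * u x) powr (p - 1)) * \<phi> x)"
        using RT(1)[OF tf] Sphi[OF tf] by simp
      have "(a + b * integral\<^sup>L ?M (\<lambda>x. (norm (?G' x))\<^sup>2)) * integral\<^sup>L ?M (\<lambda>x. ?G' x \<bullet> grad \<phi> x)
          = ((a + b * (t^2 * D)) * t) * integral\<^sup>L ?M (\<lambda>x. G x \<bullet> grad \<phi> x)"
        unfolding D' by simp
      also have "\<dots> = K * integral\<^sup>L ?M (\<lambda>x. (\<alpha> * u x powr (q - 1) + 1 * u x powr (p - 1)) * \<phi> x)"
        unfolding eq using Sphi[OF tf] by simp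
      also have "\<dots> = integral\<^sup>L ?M (\<lambda>x. (lam * (t * u x) powr (q - 1) + \<mu> * (t * u x) powr (p - 1)) * \<phi> x)"
        using RT(2)[OF tf] by simp
      finally show "(a + b * integral\<^sup>L ?M (\<lambda>x. (norm (?G' x))\<^sup>2)) * integral\<^sup>L ?M (\<lambda>x. ?G' x \<bullet> grad \<phi> x) =
        integral\<^sup>L ?M (\<lambda>x. (lam * (t * u x) powr (q - 1) + \<mu> * (t * u x) powr (p - 1)) * \<phi> x)" .
    qed
    thus "\<exists>G'. H01 \<Omega> (\<lambda>x. t * u x) G' \<and> (AE x in ?M. 0 < t * u x) \<and>
      (\<forall>\<phi>. test_fun \<Omega> \<phi> \<longrightarrow> integrable ?M (\<lambda>x. G' x \<bullet> grad \<phi> x) \<and>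
        integrable ?M (\<lambda>x. (lam * (t * u x) powr (q - 1) + \<mu> * (t * u x) powr (p - 1)) * \<phi> x) \<and>
        (a + b * integral\<^sup>L ?M (\<lambda>x. (norm (G' x))\<^sup>2)) * integral\<^sup>L ?M (\<lambda>x. G' x \<bullet> grad \<phi> x) =
        integral\<^sup>L ?M (\<lambda>x. (lam * (t * u x) powr (q - 1) + \<mu> * (t * u x) powr (p - 1)) * \<phi> x))"
      using HV vpos by blast
  qed
qed

end
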